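(* Let $\mathcal A$ be a finite set, $\mathcal R\subset F(\mathcal A)$ finite, $\phi:F(\mathcal A)\to F(\mathcal A)$ a homomorphism, $G$ the group with presentation $\mathcal P=\langle t,\mathcal A:\mathcal R,\ t^{-1}at=\phi(a)\ (a\in\mathcal A)\rangle$, $X$ its Cayley 2-complex and $P:X\to\mathbb R$ the level map. Let $e:[0,1]\to X$ be an edge of $X$ with $e(0)=v$, $e(1)=w$ and label $a\in\mathcal A$, and let $r_v,r_w$ be the edge path rays at $v$ and $w$ each of whose edges is labeled $t$. Then there is a proper map $H_e:[0,1]\times[0,\infty)\to X$ with $H_e(x,0)=e(x)$, $H_e(0,y)=r_v(y)$, $H_e(1,y)=r_w(y)$, and $P(H_e([0,1]\times[n,n+1]))\subset[P(v)+n,P(v)+n+1]$ for every integer $n\ge 0$.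
   Context: The Cayley 2-complex $X$ of $\mathcal P$ is the simply connected 2-complex whose 1-skeleton is the Cayley graph of $G$ with respect to $\mathcal A\cup\{t\}$ (vertex set $G$), with a 2-cell at each vertex for each relator. For a vertex $g$, $P(g)$ (its level) is the exponent sum of $t$ in any word representing $g$; $P$ extends to $X$ by mapping each $\mathcal R$-cell to the level of its vertices, each conjugation 2-cell (boundary $a\,t\,\phi(a)^{-1}t^{-1}$ with the $a$-edge at level $L$) onto $[L,L+1]$ with the $a$-edge to $L$ and the $\phi(a)$-edges to $L+1$, and $t$-edges linearly. Edge path rays are parametrized so that the $i$-th edge is traversed on $[i-1,i]$. *)

theory Defs
  imports "HOL-Analysis.Analysis"
begin

datatype 'a gen = T | L 'a

(* A word is a list of letters with an exponent flag: (x, False) = x, (x, True) = x^-1. *)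
type_synonym 'a fword = "('a \<times> bool) list"
type_synonym 'a gword = "('a gen \<times> bool) list"

(* 2-cells at a vertex: one for each r in R, one conjugation cell for each a in A *)
datatype 'a cell = RelCell "'a fword" | ConjCell 'a

(* points of the disjoint union of all closed cells (before gluing):
   vertices, edges g --l--> g l (parameter in [0,1]), 2-cells (closed unit disk) *)
datatype ('g, 'a) pt = Vert 'g | Edge 'g "'a gen" real | Cell 'g "'a cell" complex

definition inv_word :: "('b \<times> bool) list \<Rightarrow> ('b \<times> bool) list" where
  "inv_word w = rev (map (\<lambda>(x, b). (x, \<not> b)) w)"

definition reduced :: "('b \<times> bool) list \<Rightarrow> bool" where
  "reduced w \<longleftrightarrow> (\<forall>i. Suc i < length w \<longrightarrow>
      \<not> (fst (w ! i) = fst (w ! Suc i) \<and> snd (w ! i) \<noteq> snd (w ! Suc i)))"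

definition over :: "'b set \<Rightarrow> ('b \<times> bool) list \<Rightarrow> bool" where
  "over S w \<longleftrightarrow> (\<forall>x\<in>set w. fst x \<in> S)"

definition liftw :: "'a fword \<Rightarrow> 'a gword" where
  "liftw w = map (\<lambda>(x, b). (L x, b)) w"

definition gens :: "'a set \<Rightarrow> 'a gen set" where
  "gens A = insert T (L ` A)"

definition conjrel :: "('a \<Rightarrow> 'a fword) \<Rightarrow> 'a \<Rightarrow> 'a gword" where
  "conjrel phi a = [(L a, False), (T, False)] @ inv_word (liftw (phi a)) @ [(T, True)]"

definition cellword :: "('a \<Rightarrow> 'a fword) \<Rightarrow> 'a cell \<Rightarrow> 'a gword" where
  "cellword phi c = (case c of RelCell r \<Rightarrow> liftw r | ConjCell a \<Rightarrow> conjrel phi a)"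

definition cells :: "'a set \<Rightarrow> 'a fword set \<Rightarrow> 'a cell set" where
  "cells A R = RelCell ` R \<union> ConjCell ` A"

definition relators :: "'a set \<Rightarrow> 'a fword set \<Rightarrow> ('a \<Rightarrow> 'a fword) \<Rightarrow> 'a gword set" where
  "relators A R phi = liftw ` R \<union> conjrel phi ` A"

(* equality in the group given by the presentation with relator set Q *)
inductive geq :: "'a gword set \<Rightarrow> 'a gword \<Rightarrow> 'a gword \<Rightarrow> bool" for Q where
  refl: "geq Q w w"
| sym: "geq Q u v \<Longrightarrow> geq Q v u"
| trans: "geq Q u v \<Longrightarrow> geq Q v w \<Longrightarrow> geq Q u w"
| cancel: "geq Q (p @ [(x, b), (x, \<not> b)] @ q) (p @ q)"
| rel: "r \<in> Q \<Longrightarrow> geq Q (p @ r @ q) (p @ q)"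

(* group elements = classes of words over A \<union> {t} *)
definition cls :: "'a set \<Rightarrow> 'a fword set \<Rightarrow> ('a \<Rightarrow> 'a fword) \<Rightarrow> 'a gword \<Rightarrow> 'a gword set" where
  "cls A R phi w = {u. over (gens A) u \<and> geq (relators A R phi) u w}"

definition verts :: "'a set \<Rightarrow> 'a fword set \<Rightarrow> ('a \<Rightarrow> 'a fword) \<Rightarrow> 'a gword set set" where
  "verts A R phi = {cls A R phi w | w. over (gens A) w}"

definition rep :: "'b set \<Rightarrow> 'b" where
  "rep g = (SOME w. w \<in> g)"

definition gapp :: "'a set \<Rightarrow> 'a fword set \<Rightarrow> ('a \<Rightarrow> 'a fword) \<Rightarrow> 'a gword set \<Rightarrow> 'a gword \<Rightarrow> 'a gword set" where
  "gapp A R phi g w = cls A R phi (rep g @ w)"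

definition gstep :: "'a set \<Rightarrow> 'a fword set \<Rightarrow> ('a \<Rightarrow> 'a fword) \<Rightarrow> 'a gword set \<Rightarrow> 'a gen \<Rightarrow> 'a gword set" where
  "gstep A R phi g l = gapp A R phi g [(l, False)]"

definition tsum :: "'a gword \<Rightarrow> int" where
  "tsum w = sum_list (map (\<lambda>(x, b). if x = T then (if b then -1 else 1) else 0) w)"

definition lev :: "'a gword set \<Rightarrow> real" where
  "lev g = real_of_int (tsum (rep g))"

type_synonym 'a xpt = "('a gword set, 'a) pt"

definition pre_carrier :: "'a set \<Rightarrow> 'a fword set \<Rightarrow> ('a \<Rightarrow> 'a fword) \<Rightarrow> 'a xpt set" where
  "pre_carrier A R phi =
     Vert ` verts A R phi
     \<union> {Edge g l s | g l s. g \<in> verts A R phi \<and> l \<in> gens A \<and> 0 \<le> s \<and> s \<le> 1}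
     \<union> {Cell g c z | g c z. g \<in> verts A R phi \<and> c \<in> cells A R \<and> cmod z \<le> 1}"

definition pre_top :: "'a set \<Rightarrow> 'a fword set \<Rightarrow> ('a \<Rightarrow> 'a fword) \<Rightarrow> 'a xpt topology" where
  "pre_top A R phi = topology (\<lambda>U. U \<subseteq> pre_carrier A R phi
      \<and> (\<forall>g l. openin (top_of_set {0..1}) {s \<in> {0..1}. Edge g l s \<in> U})
      \<and> (\<forall>g c. openin (top_of_set (cball 0 1)) {z \<in> cball 0 1. Cell g c z \<in> U}))"

definition qtop :: "'b topology \<Rightarrow> ('b \<Rightarrow> 'c) \<Rightarrow> 'c topology" where
  "qtop S f = topology (\<lambda>U. U \<subseteq> f ` topspace S \<and> openin S {x \<in> topspace S. f x \<in> U})"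

definition canon_edge :: "'a set \<Rightarrow> 'a fword set \<Rightarrow> ('a \<Rightarrow> 'a fword) \<Rightarrow> 'a gword set \<Rightarrow> 'a gen \<Rightarrow> real \<Rightarrow> 'a xpt" where
  "canon_edge A R phi g l s =
     (if s = 0 then Vert g else if s = 1 then Vert (gstep A R phi g l) else Edge g l s)"

(* attaching map of a 2-cell at g with boundary word w (unit circle divided into
   length w arcs, traversed counterclockwise starting at 1) *)
definition bdry :: "'a set \<Rightarrow> 'a fword set \<Rightarrow> ('a \<Rightarrow> 'a fword) \<Rightarrow> 'a gword set \<Rightarrow> 'a gword \<Rightarrow> complex \<Rightarrow> 'a xpt" where
  "bdry A R phi g w z =
     (if w = [] then Vert g else
      (let n = length w; \<theta> = Arg2pi z / (2 * pi); k = nat \<lfloor>real n * \<theta>\<rfloor>;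
           s = real n * \<theta> - real k; l = fst (w ! k); b = snd (w ! k)
       in if \<not> b then canon_edge A R phi (gapp A R phi g (take k w)) l s
          else canon_edge A R phi (gapp A R phi g (take (Suc k) w)) l (1 - s)))"

definition canon :: "'a set \<Rightarrow> 'a fword set \<Rightarrow> ('a \<Rightarrow> 'a fword) \<Rightarrow> 'a xpt \<Rightarrow> 'a xpt" where
  "canon A R phi p = (case p of
       Vert g \<Rightarrow> Vert g
     | Edge g l s \<Rightarrow> canon_edge A R phi g l s
     | Cell g c z \<Rightarrow> (if cmod z = 1 then bdry A R phi g (cellword phi c) z else Cell g c z))"

definition cayley2 :: "'a set \<Rightarrow> 'a fword set \<Rightarrow> ('a \<Rightarrow> 'a fword) \<Rightarrow> 'a xpt topology" where
  "cayley2 A R phi = qtop (pre_top A R phi) (canon A R phi)"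

definition edgemap :: "'a set \<Rightarrow> 'a fword set \<Rightarrow> ('a \<Rightarrow> 'a fword) \<Rightarrow> 'a gword set \<Rightarrow> 'a \<Rightarrow> real \<Rightarrow> 'a xpt" where
  "edgemap A R phi v a x = canon A R phi (Edge v (L a) x)"

(* edge path ray at v all of whose edges are labelled t; i-th edge on [i-1,i] *)
definition tray :: "'a set \<Rightarrow> 'a fword set \<Rightarrow> ('a \<Rightarrow> 'a fword) \<Rightarrow> 'a gword set \<Rightarrow> real \<Rightarrow> 'a xpt" where
  "tray A R phi v y =
     canon A R phi (Edge (gapp A R phi v (replicate (nat \<lfloor>y\<rfloor>) (T, False))) T (y - of_int \<lfloor>y\<rfloor>))"

definition is_level_map :: "'a set \<Rightarrow> 'a fword set \<Rightarrow> ('a \<Rightarrow> 'a fword) \<Rightarrow> ('a xpt \<Rightarrow> real) \<Rightarrow> bool" where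
  "is_level_map A R phi P \<longleftrightarrow>
     continuous_map (cayley2 A R phi) euclideanreal P \<and>
     (\<forall>g\<in>verts A R phi.
        P (Vert g) = lev g
      \<and> (\<forall>a\<in>A. \<forall>s. 0 < s \<and> s < 1 \<longrightarrow> P (Edge g (L a) s) = lev g)
      \<and> (\<forall>s. 0 < s \<and> s < 1 \<longrightarrow> P (Edge g T s) = lev g + s)
      \<and> (\<forall>r\<in>R. \<forall>z. cmod z < 1 \<longrightarrow> P (Cell g (RelCell r) z) = lev g)
      \<and> (\<forall>a\<in>A. \<forall>z. cmod z < 1 \<longrightarrow> P (Cell g (ConjCell a) z) \<in> {lev g .. lev g + 1}))"

definition proper_cmap :: "'b topology \<Rightarrow> 'c topology \<Rightarrow> ('b \<Rightarrow> 'c) \<Rightarrow> bool" where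
  "proper_cmap S Y f \<longleftrightarrow> continuous_map S Y f \<and>
     (\<forall>K. compactin Y K \<longrightarrow> compactin S {x \<in> topspace S. f x \<in> K})"

end

theory Submission
  imports Defs
begin

definition flipl :: "'b \<times> bool \<Rightarrow> 'b \<times> bool" where "flipl x = (fst x, \<not> snd x)"

lemma inv_word_Nil[simp]: "inv_word [] = []" by (simp add: inv_word_def)
lemma inv_word_Cons[simp]: "inv_word (x # w) = inv_word w @ [flipl x]"
  by (cases x) (simp add: inv_word_def flipl_def)
lemma inv_word_append[simp]: "inv_word (u @ w) = inv_word w @ inv_word u"
  by (simp add: inv_word_def)
lemma flipl_flipl[simp]: "flipl (flipl x) = x" by (simp add: flipl_def)
lemma inv_word_inv_word[simp]: "inv_word (inv_word w) = w"
  by (induction w) (simp_all add: inv_word_def flipl_def split_def)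
lemma length_inv_word[simp]: "length (inv_word w) = length w" by (simp add: inv_word_def)

lemma geq_app: "geq Q u v \<Longrightarrow> geq Q (p @ u @ q) (p @ v @ q)"
proof (induction rule: geq.induct)
  case (refl w) then show ?case by (rule geq.refl)
next
  case (sym u v) then show ?case by (blast intro: geq.sym)
next
  case (trans u v w) then show ?case by (metis geq.trans)
next
  case (cancel p' x b q') then show ?case
    using geq.cancel[of Q "p @ p'" x b "q' @ q"] by simp
next
  case (rel r p' q') then show ?case
    using geq.rel[of r Q "p @ p'" "q' @ q"] by simp
qed

lemma geq_cancel_word: "geq Q (p @ w @ inv_word w @ q) (p @ q)"
proof (induction w arbitrary: p q)
  case Nil then show ?case by (simp add: geq.refl)
next
  case (Cons x w)
  have 1: "geq Q ((p @ [x]) @ w @ inv_word w @ ([flipl x] @ q)) ((p @ [x]) @ [flipl x] @ q)"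
    by (rule Cons)
  have 2: "geq Q (p @ [(fst x, snd x), (fst x, \<not> snd x)] @ q) (p @ q)" by (rule geq.cancel)
  show ?case using geq.trans[OF 1] 2 by (simp add: flipl_def)
qed

lemma geq_cancel_word': "geq Q (p @ inv_word w @ w @ q) (p @ q)"
  using geq_cancel_word[of Q p "inv_word w" q] by simp

lemma geq_rel_ins: "r \<in> Q \<Longrightarrow> geq Q (p @ q) (p @ r @ q)"
  by (rule geq.sym, rule geq.rel)

lemma tsum_append[simp]: "tsum (u @ w) = tsum u + tsum w" by (simp add: tsum_def)
lemma tsum_Nil[simp]: "tsum [] = 0" by (simp add: tsum_def)
lemma tsum_Cons[simp]: "tsum (x # w) = (if fst x = T then (if snd x then -1 else 1) else 0) + tsum w"
  by (simp add: tsum_def split_def)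
lemma tsum_inv_word[simp]: "tsum (inv_word w) = - tsum w"
  by (induction w) (auto simp: flipl_def)
lemma tsum_liftw[simp]: "tsum (liftw w) = 0"
  by (induction w) (auto simp: liftw_def)
lemma tsum_replicate_T[simp]: "tsum (replicate n (T, False)) = int n"
  by (induction n) auto

lemma tsum_relators: "r \<in> relators A R phi \<Longrightarrow> tsum r = 0"
  by (auto simp: relators_def conjrel_def)

lemma tsum_geq: "geq (relators A R phi) u v \<Longrightarrow> tsum u = tsum v"
  by (induction rule: geq.induct) (auto simp: tsum_relators)

locale cx =
  fixes A :: "'a set" and R :: "'a fword set" and phi :: "'a \<Rightarrow> 'a fword"
begin

abbreviation "QQ \<equiv> relators A R phi"
abbreviation "cl \<equiv> cls A R phi"
abbreviation "VV \<equiv> verts A R phi"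
abbreviation "ga \<equiv> gapp A R phi"
abbreviation "GG \<equiv> gens A"

lemma cls_eq: "geq QQ x y \<Longrightarrow> cl x = cl y"
  unfolding cls_def by (auto intro: geq.trans geq.sym)

lemma cls_mem: "over GG x \<Longrightarrow> x \<in> cl x"
  unfolding cls_def by (auto intro: geq.refl)

lemma cls_memD: "u \<in> cl x \<Longrightarrow> over GG u \<and> geq QQ u x"
  unfolding cls_def by auto

lemma over_append[simp]: "over S (u @ w) \<longleftrightarrow> over S u \<and> over S w"
  by (auto simp: over_def)
lemma over_Nil[simp]: "over S []" by (simp add: over_def)
lemma over_Cons[simp]: "over S (x # w) \<longleftrightarrow> fst x \<in> S \<and> over S w"
  by (simp add: over_def)
lemma over_inv_word[simp]: "over S (inv_word w) \<longleftrightarrow> over S w"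
  by (induction w) (auto simp: flipl_def)
lemma over_take: "over S w \<Longrightarrow> over S (take k w)"
  by (auto simp: over_def dest: in_set_takeD)
lemma over_drop: "over S w \<Longrightarrow> over S (drop k w)"
  by (auto simp: over_def dest: in_set_dropD)
lemma over_nth: "over S w \<Longrightarrow> k < length w \<Longrightarrow> fst (w ! k) \<in> S"
  by (auto simp: over_def)

lemma verts_cases: "g \<in> VV \<Longrightarrow> \<exists>w. over GG w \<and> g = cl w"
  unfolding verts_def by auto

lemma rep_mem: "g \<in> VV \<Longrightarrow> rep g \<in> g"
  unfolding rep_def by (metis verts_cases cls_mem someI)

lemma rep_over: "g \<in> VV \<Longrightarrow> over GG (rep g)"
  by (metis rep_mem verts_cases cls_memD)

lemma cls_rep: "g \<in> VV \<Longrightarrow> cl (rep g) = g"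
  by (metis rep_mem verts_cases cls_memD cls_eq)

lemma cls_in_verts: "over GG w \<Longrightarrow> cl w \<in> VV"
  unfolding verts_def by auto

lemma gapp_cls: "over GG u \<Longrightarrow> ga (cl u) w = cl (u @ w)"
proof -
  assume u: "over GG u"
  have "rep (cl u) \<in> cl u" using rep_mem[OF cls_in_verts[OF u]] .
  then have "geq QQ (rep (cl u)) u" by (simp add: cls_memD)
  then have "geq QQ ([] @ rep (cl u) @ w) ([] @ u @ w)" by (rule geq_app)
  then show ?thesis unfolding gapp_def by (simp add: cls_eq)
qed

lemma gapp_verts: "g \<in> VV \<Longrightarrow> over GG w \<Longrightarrow> ga g w \<in> VV"
  unfolding gapp_def by (rule cls_in_verts) (simp add: rep_over)

lemma gapp_assoc: "g \<in> VV \<Longrightarrow> over GG u \<Longrightarrow> ga (ga g u) w = ga g (u @ w)"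
  unfolding gapp_def[of _ _ _ g] by (subst gapp_cls) (auto simp: rep_over)

lemma gapp_Nil: "g \<in> VV \<Longrightarrow> ga g [] = g"
  unfolding gapp_def by (simp add: cls_rep)

lemma gapp_geq: "geq QQ u w \<Longrightarrow> ga g u = ga g w"
  unfolding gapp_def by (rule cls_eq) (rule geq_app[of _ _ _ _ "[]", simplified])

lemma gstep_eq: "gstep A R phi g l = ga g [(l, False)]"
  by (simp add: gstep_def)

lemma lev_cls: "over GG u \<Longrightarrow> lev (cl u) = tsum u"
  unfolding lev_def
  by (metis rep_mem cls_in_verts cls_memD tsum_geq)

lemma lev_gapp: "g \<in> VV \<Longrightarrow> over GG w \<Longrightarrow> lev (ga g w) = lev g + tsum w"
  unfolding gapp_def by (simp add: lev_cls rep_over) (simp add: lev_def)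


lemma gen_T[simp]: "T \<in> GG" by (simp add: gens_def)
lemma gen_L[simp]: "L b \<in> GG \<longleftrightarrow> b \<in> A" by (auto simp: gens_def)

lemma over_liftw: "over A w \<Longrightarrow> over GG (liftw w)"
  by (induction w) (auto simp: liftw_def)
lemma liftw_append[simp]: "liftw (u @ w) = liftw u @ liftw w" by (simp add: liftw_def)
lemma length_liftw[simp]: "length (liftw w) = length w" by (simp add: liftw_def)

lemma conjrel_over: "b \<in> A \<Longrightarrow> over A (phi b) \<Longrightarrow> over GG (conjrel phi b)"
  by (simp add: conjrel_def over_liftw)

lemma conjrel_rel: "b \<in> A \<Longrightarrow> conjrel phi b \<in> QQ"
  by (simp add: relators_def)

lemma gapp_rel: "g \<in> VV \<Longrightarrow> r \<in> QQ \<Longrightarrow> ga g r = g"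
proof -
  assume g: "g \<in> VV" and r: "r \<in> QQ"
  have "geq QQ ([] @ r @ []) ([] @ [])" by (rule geq.rel[OF r])
  then have "ga g r = ga g []" using gapp_geq by simp
  then show ?thesis using gapp_Nil[OF g] by simp
qed

lemma gapp_cancel1: "g \<in> VV \<Longrightarrow> ga g (p @ [(x, e), (x, \<not> e)] @ q) = ga g (p @ q)"
  by (rule gapp_geq, rule geq.cancel)

definition phiL :: "'a gen \<times> bool \<Rightarrow> 'a gword" where
  "phiL c = (case fst c of L b \<Rightarrow> (if snd c then inv_word (liftw (phi b)) else liftw (phi b)) | T \<Rightarrow> [])"

lemma phiL_over: "b \<in> A \<Longrightarrow> over A (phi b) \<Longrightarrow> over GG (phiL (L b, e))"
  by (simp add: phiL_def over_liftw)

lemma tsum_phiL[simp]: "tsum (phiL c) = 0"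
  by (simp add: phiL_def split: gen.split)

lemma geq_conj: "b \<in> A \<Longrightarrow> geq QQ [(L b, e), (T, False)] ((T, False) # phiL (L b, e))"
proof -
  assume b: "b \<in> A"
  let ?W = "liftw (phi b)"
  have r: "conjrel phi b \<in> QQ" using b by (rule conjrel_rel)
  show ?thesis
  proof (cases e)
    case False
    have 1: "geq QQ ([(L b,False),(T,False)] @ inv_word ?W @ [(T,True),(T,False)] @ ?W)
                    ([(L b,False),(T,False)] @ inv_word ?W @ ?W)"
      using geq.cancel[of QQ "[(L b,False),(T,False)] @ inv_word ?W" T True ?W] by simp
    have 2: "geq QQ ([(L b,False),(T,False)] @ inv_word ?W @ ?W @ []) ([(L b,False),(T,False)] @ [])"
      by (rule geq_cancel_word')
    have 3: "geq QQ ([] @ conjrel phi b @ ((T,False) # ?W)) ([] @ ((T,False) # ?W))"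
      by (rule geq.rel[OF r])
    have "geq QQ [(L b,False),(T,False)] ([(L b,False),(T,False)] @ inv_word ?W @ [(T,True),(T,False)] @ ?W)"
      using 1 2 by (auto intro: geq.sym geq.trans)
    then show ?thesis using 3 False by (auto simp: conjrel_def phiL_def intro: geq.trans)
  next
    case True
    have 3: "geq QQ ([(L b,True)] @ conjrel phi b @ [(T,False)]) ([(L b,True)] @ [(T,False)])"
      by (rule geq.rel[OF r])
    have 1: "geq QQ ([] @ [(L b,True),(L b,False)] @ ((T,False) # inv_word ?W @ [(T,True),(T,False)]))
        ([] @ ((T,False) # inv_word ?W @ [(T,True),(T,False)]))"
      using geq.cancel[of QQ "[]" "L b" True "(T,False) # inv_word ?W @ [(T,True),(T,False)]"] by simp
    have 2: "geq QQ (((T,False) # inv_word ?W) @ [(T,True),(T,False)] @ []) (((T,False) # inv_word ?W) @ [])"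
      using geq.cancel[of QQ "(T,False) # inv_word ?W" T True "[]"] by simp
    have "geq QQ ([(L b,True)] @ conjrel phi b @ [(T,False)]) ((T,False) # inv_word ?W)"
      using 1 2 by (auto simp: conjrel_def intro: geq.trans)
    then show ?thesis using 3 True by (auto simp: phiL_def intro: geq.trans geq.sym)
  qed
qed

lemma gapp_conj: "g \<in> VV \<Longrightarrow> b \<in> A \<Longrightarrow> ga g [(L b, e), (T, False)] = ga g ((T, False) # phiL (L b, e))"
  by (rule gapp_geq, rule geq_app[of _ _ _ "[]" "[]", simplified], rule geq_conj)

definition lpt :: "'a gword set \<Rightarrow> 'a gen \<times> bool \<Rightarrow> real \<Rightarrow> 'a xpt" where
  "lpt u c s = (if \<not> snd c then canon_edge A R phi u (fst c) s
                else canon_edge A R phi (ga u [c]) (fst c) (1 - s))"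

lemma lpt_0: "u \<in> VV \<Longrightarrow> fst c \<in> GG \<Longrightarrow> lpt u c 0 = Vert u"
proof (cases c)
  case (Pair l e)
  assume u: "u \<in> VV" and l: "fst c \<in> GG"
  show ?thesis
  proof (cases e)
    case True
    have "ga (ga u [(l,True)]) [(l,False)] = ga u ([] @ [(l,True),(l,\<not>True)] @ [])"
      using u l Pair by (simp add: gapp_assoc)
    also have "\<dots> = u" using gapp_cancel1[OF u, of "[]" l True "[]"] by (simp add: gapp_Nil u)
    finally show ?thesis using Pair True by (simp add: lpt_def canon_edge_def gstep_eq)
  qed (simp add: lpt_def canon_edge_def Pair)
qed

lemma lpt_1: "u \<in> VV \<Longrightarrow> fst c \<in> GG \<Longrightarrow> lpt u c 1 = Vert (ga u [c])"
  by (cases c) (auto simp: lpt_def canon_edge_def gstep_eq)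

lemma lpt_rev: "u \<in> VV \<Longrightarrow> fst c \<in> GG \<Longrightarrow> lpt u c s = lpt (ga u [c]) (flipl c) (1 - s)"
proof (cases c)
  case (Pair l e)
  assume u: "u \<in> VV" and l: "fst c \<in> GG"
  show ?thesis
  proof (cases e)
    case False
    have "ga (ga u [(l,False)]) [(l,True)] = ga u ([] @ [(l,False),(l,\<not>False)] @ [])"
      using u l Pair by (simp add: gapp_assoc)
    also have "\<dots> = u" using gapp_cancel1[OF u, of "[]" l False "[]"] by (simp add: gapp_Nil u)
    finally show ?thesis using Pair False by (simp add: lpt_def flipl_def)
  qed (simp add: lpt_def flipl_def Pair)
qed

lemma inv_word_nth: "i < length w \<Longrightarrow> inv_word w ! i = flipl (w ! (length w - Suc i))"
  by (simp add: inv_word_def rev_nth flipl_def split_def)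

lemma take_inv_word: "i \<le> length w \<Longrightarrow> take i (inv_word w) = inv_word (drop (length w - i) w)"
  by (simp add: inv_word_def take_rev drop_map)

end

context cx
begin


lemma floor_k_s: "0 \<le> s \<Longrightarrow> s < 1 \<Longrightarrow> nat \<lfloor>real k + s\<rfloor> = k"
proof -
  assume "0 \<le> s" "s < 1"
  then have "\<lfloor>real k + s\<rfloor> = int k" by (simp add: floor_eq_iff)
  then show ?thesis by simp
qed

lemma bdry_cis:
  assumes h: "h \<in> VV" and w: "over GG w" and k: "k < length w" and s: "0 \<le> s" "s < 1"
  shows "bdry A R phi h w (cis (2 * pi * ((real k + s) / real (length w)))) = lpt (ga h (take k w)) (w ! k) s"
proof -
  let ?n = "length w"
  have n: "?n > 0" using k by linarith
  have le: "real k + s < real ?n" using k s by linarith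
  have th0: "0 \<le> 2 * pi * ((real k + s) / real ?n)" using s by simp
  have q: "(real k + s) / real ?n < 1" using le n by simp
  have "2 * pi * ((real k + s) / real ?n) < 2 * pi * 1" by (rule mult_strict_left_mono[OF q]) simp
  then have th1: "2 * pi * ((real k + s) / real ?n) < 2 * pi" by simp
  have arg: "Arg2pi (cis (2 * pi * ((real k + s) / real ?n))) = 2 * pi * ((real k + s) / real ?n)"
    unfolding cis_conv_exp using th0 th1 by (subst Arg2pi_exp) auto
  have e1: "real ?n * (Arg2pi (cis (2 * pi * ((real k + s) / real ?n))) / (2 * pi)) = real k + s"
    unfolding arg using n by (simp add: field_simps)
  have fl: "nat \<lfloor>real k + s\<rfloor> = k" using s by (rule floor_k_s)
  have wne: "w \<noteq> []" using k by auto
  have tk: "ga (ga h (take k w)) [w ! k] = ga h (take (Suc k) w)"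
    using h w k by (simp add: gapp_assoc over_take take_Suc_conv_app_nth)
  show ?thesis
    unfolding bdry_def Let_def e1 fl using n tk wne by (simp add: lpt_def)
qed

lemma lpt_next:
  assumes h: "h \<in> VV" and w: "over GG w" and k: "Suc k < length w"
  shows "lpt (ga h (take k w)) (w ! k) 1 = lpt (ga h (take (Suc k) w)) (w ! Suc k) 0"
proof -
  have v1: "ga h (take k w) \<in> VV" "ga h (take (Suc k) w) \<in> VV"
    using h w by (simp_all add: gapp_verts over_take)
  have tk: "ga (ga h (take k w)) [w ! k] = ga h (take (Suc k) w)"
    using h w k by (simp add: gapp_assoc over_take take_Suc_conv_app_nth)
  show ?thesis using v1 tk w k
    by (simp add: lpt_1 lpt_0 over_nth)
qed

lemma bdry_cis':
  assumes h: "h \<in> VV" and w: "over GG w" and hw: "ga h w = h" and k: "k < length w"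
    and s: "0 \<le> s" "s \<le> 1"
  shows "bdry A R phi h w (cis (2 * pi * ((real k + s) / real (length w)))) = lpt (ga h (take k w)) (w ! k) s"
proof (cases "s < 1")
  case True then show ?thesis using bdry_cis[OF h w k s(1)] by simp
next
  case False
  then have s1: "s = 1" using s by simp
  show ?thesis
  proof (cases "Suc k < length w")
    case True
    have "bdry A R phi h w (cis (2 * pi * ((real (Suc k) + 0) / real (length w)))) = lpt (ga h (take (Suc k) w)) (w ! Suc k) 0"
      by (rule bdry_cis[OF h w True]) auto
    then show ?thesis using s1 lpt_next[OF h w True] by (simp add: add.commute)
  next
    case False
    then have kn: "Suc k = length w" using k by simp
    have c2: "cis (pi * 2) = 1" by (simp add: complex_eq_iff)
    have c1: "cis (2 * pi * ((real k + s) / real (length w))) = cis (2 * pi * ((real 0 + 0) / real (length w)))"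
      using s1 kn c2 by (simp add: field_simps flip: of_nat_Suc)
    have "bdry A R phi h w (cis (2 * pi * ((real 0 + 0) / real (length w)))) = lpt (ga h (take 0 w)) (w ! 0) 0"
      by (rule bdry_cis[OF h w]) (use k in auto)
    also have "\<dots> = Vert h"
    proof -
      have "fst (w ! 0) \<in> GG" using w k by (intro over_nth) auto
      then show ?thesis using h by (simp add: gapp_Nil lpt_0)
    qed
    also have "\<dots> = lpt (ga h (take k w)) (w ! k) 1"
    proof -
      have "ga (ga h (take k w)) [w ! k] = ga h (take (Suc k) w)"
        using h w k by (simp add: gapp_assoc over_take take_Suc_conv_app_nth)
      then show ?thesis using h w k kn hw by (simp add: lpt_1 gapp_verts over_take over_nth)
    qed
    finally show ?thesis using c1 s1 by simp
  qed
qed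

definition pathpt :: "'a gword set \<Rightarrow> 'a gword \<Rightarrow> real \<Rightarrow> 'a xpt" where
  "pathpt u W x = (if W = [] then Vert u else
     (let N = length W; j = min (nat \<lfloor>x * real N\<rfloor>) (N - 1)
      in lpt (ga u (take j W)) (W ! j) (x * real N - real j)))"

lemma pathpt_any:
  assumes u: "u \<in> VV" and W: "over GG W" and j: "j < length W"
    and x: "real j \<le> x * real (length W)" "x * real (length W) \<le> real j + 1"
  shows "pathpt u W x = lpt (ga u (take j W)) (W ! j) (x * real (length W) - real j)"
proof -
  let ?N = "length W"
  have ne: "W \<noteq> []" using j by auto
  show ?thesis
  proof (cases "x * real ?N < real j + 1")
    case True
    then have "\<lfloor>x * real ?N\<rfloor> = int j" using x by (simp add: floor_eq_iff)
    then have "min (nat \<lfloor>x * real ?N\<rfloor>) (?N - 1) = j" using j by simp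
    then show ?thesis using ne by (simp add: pathpt_def Let_def)
  next
    case False
    then have eq: "x * real ?N = real j + 1" using x by simp
    then have fl: "nat \<lfloor>x * real ?N\<rfloor> = Suc j" by simp
    show ?thesis
    proof (cases "Suc j < ?N")
      case True
      then have "min (nat \<lfloor>x * real ?N\<rfloor>) (?N - 1) = Suc j" using fl by simp
      then have "pathpt u W x = lpt (ga u (take (Suc j) W)) (W ! Suc j) 0"
        using ne eq by (simp add: pathpt_def Let_def)
      also have "\<dots> = lpt (ga u (take j W)) (W ! j) 1" using lpt_next[OF u W True] by simp
      finally show ?thesis using eq by simp
    next
      case False
      then have "min (nat \<lfloor>x * real ?N\<rfloor>) (?N - 1) = j" using fl j by simp
      then show ?thesis using ne by (simp add: pathpt_def Let_def)
    qed
  qed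
qed

lemma pathpt_exists_j:
  assumes "W \<noteq> []" "0 \<le> x" "x \<le> 1"
  shows "\<exists>j. j < length W \<and> real j \<le> x * real (length W) \<and> x * real (length W) \<le> real j + 1"
proof -
  let ?N = "length W"
  define j where "j = min (nat \<lfloor>x * real ?N\<rfloor>) (?N - 1)"
  have N: "?N > 0" using assms by simp
  have xN: "0 \<le> x * real ?N" "x * real ?N \<le> real ?N" using assms by (auto simp: mult_left_le_one_le)
  have jN: "j < ?N" using N by (simp add: j_def min_less_iff_disj)
  have f: "real (nat \<lfloor>x * real ?N\<rfloor>) = of_int \<lfloor>x * real ?N\<rfloor>" using xN by simp
  have f2: "of_int \<lfloor>x * real ?N\<rfloor> \<le> x * real ?N" by (rule of_int_floor_le)
  have "real j \<le> real (nat \<lfloor>x * real ?N\<rfloor>)" unfolding j_def by simp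
  moreover have "real j \<le> x * real ?N" using f f2 calculation by linarith
  moreover have "x * real ?N \<le> real j + 1"
  proof (cases "nat \<lfloor>x * real ?N\<rfloor> \<le> ?N - 1")
    case True
    then have "j = nat \<lfloor>x * real ?N\<rfloor>" by (simp add: j_def)
    then show ?thesis using xN by linarith
  next
    case False
    then have "j = ?N - 1" by (simp add: j_def)
    moreover have "real (?N - 1) + 1 = real ?N" using N by (simp add: of_nat_diff Suc_le_eq)
    ultimately show ?thesis using xN by simp
  qed
  ultimately show ?thesis using jN by blast
qed

lemma pathpt_rev:
  assumes u: "u \<in> VV" and W: "over GG W" and x: "0 \<le> x" "x \<le> 1"
  shows "pathpt u W (1 - x) = pathpt (ga u W) (inv_word W) x"
proof (cases "W = []")
  case True then show ?thesis using u by (simp add: pathpt_def gapp_Nil)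
next
  case False
  let ?N = "length W"
  obtain j where j: "j < ?N" "real j \<le> x * real ?N" "x * real ?N \<le> real j + 1"
    using pathpt_exists_j[OF False x] by blast
  define j' where "j' = ?N - Suc j"
  have j': "j' < ?N" "real j' \<le> (1 - x) * real ?N" "(1 - x) * real ?N \<le> real j' + 1"
    using j by (auto simp: j'_def of_nat_diff algebra_simps)
  have Wi: "over GG (inv_word W)" using W by simp
  have uW: "ga u W \<in> VV" using u W by (simp add: gapp_verts)
  have "pathpt (ga u W) (inv_word W) x = lpt (ga (ga u W) (take j (inv_word W))) (inv_word W ! j) (x * real ?N - real j)"
    using pathpt_any[OF uW Wi, of j x] j by simp
  also have "inv_word W ! j = flipl (W ! j')" using j by (simp add: inv_word_nth j'_def)
  also have "take j (inv_word W) = inv_word (drop (Suc j') W)"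
    using j by (simp add: take_inv_word j'_def Suc_diff_Suc)
  also have "ga (ga u W) (inv_word (drop (Suc j') W)) = ga (ga u (take j' W)) [W ! j']"
  proof -
    have "ga (ga u W) (inv_word (drop (Suc j') W)) = ga u (W @ inv_word (drop (Suc j') W))"
      using u W by (simp add: gapp_assoc)
    also have "W @ inv_word (drop (Suc j') W) = take (Suc j') W @ drop (Suc j') W @ inv_word (drop (Suc j') W) @ []"
      by simp
    also have "ga u (take (Suc j') W @ drop (Suc j') W @ inv_word (drop (Suc j') W) @ []) = ga u (take (Suc j') W @ [])"
      by (rule gapp_geq[OF geq_cancel_word])
    also have "\<dots> = ga (ga u (take j' W)) [W ! j']"
      using u W j' by (simp add: gapp_assoc over_take take_Suc_conv_app_nth)
    finally show ?thesis .
  qed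
  finally have r: "pathpt (ga u W) (inv_word W) x = lpt (ga (ga u (take j' W)) [W ! j']) (flipl (W ! j')) (x * real ?N - real j)" .
  have l: "pathpt u W (1 - x) = lpt (ga u (take j' W)) (W ! j') ((1 - x) * real ?N - real j')"
    by (rule pathpt_any[OF u W j'])
  have "lpt (ga u (take j' W)) (W ! j') ((1 - x) * real ?N - real j') =
        lpt (ga (ga u (take j' W)) [W ! j']) (flipl (W ! j')) (1 - ((1 - x) * real ?N - real j'))"
    using u W j' by (intro lpt_rev) (simp_all add: gapp_verts over_take over_nth)
  also have "1 - ((1 - x) * real ?N - real j') = x * real ?N - real j"
    using j by (simp add: j'_def of_nat_diff algebra_simps)
  finally show ?thesis using l r by simp
qed

end

lemma cis_add_2pi: "cis (a + 2 * pi) = cis a"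
  by (simp add: complex_eq_iff)

lemma cont_polar:
  fixes \<rho> \<theta> :: "'b::metric_space \<Rightarrow> real"
  assumes r: "continuous_on S \<rho>"
    and t: "\<And>p. p \<in> S \<Longrightarrow> \<rho> p \<noteq> 0 \<Longrightarrow> continuous (at p within S) \<theta>"
  shows "continuous_on S (\<lambda>p. complex_of_real (\<rho> p) * cis (\<theta> p))"
  unfolding continuous_on_eq_continuous_within
proof
  fix p assume p: "p \<in> S"
  have rp: "continuous (at p within S) \<rho>" using r p by (simp add: continuous_on_eq_continuous_within)
  show "continuous (at p within S) (\<lambda>p. complex_of_real (\<rho> p) * cis (\<theta> p))"
  proof (cases "\<rho> p = 0")
    case False
    show ?thesis using rp t[OF p False] unfolding cis_conv_exp by (intro continuous_intros) auto
  next
    case True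
    have "((\<lambda>q. \<rho> q) \<longlongrightarrow> 0) (at p within S)" using rp True by (simp add: continuous_within)
    then have "((\<lambda>q. norm (complex_of_real (\<rho> q) * cis (\<theta> q))) \<longlongrightarrow> 0) (at p within S)"
      by (simp add: norm_mult tendsto_rabs_zero)
    then have "((\<lambda>q. complex_of_real (\<rho> q) * cis (\<theta> q)) \<longlongrightarrow> 0) (at p within S)"
      by (rule tendsto_norm_zero_cancel)
    then show ?thesis using True by (simp add: continuous_within)
  qed
qed

definition "zb m p = complex_of_real (1 - 2 * snd p) * cis (2 * pi * ((1/2 + (fst p - 1/2) / (1 - 2 * snd p)) / m))"
definition "zr m p = complex_of_real (2 * fst p - 1) * cis (2 * pi * ((1 + (1/2 + (snd p - 1/2) / (2 * fst p - 1))) / m))"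
definition "zt m p = complex_of_real (2 * snd p - 1) * cis (2 * pi * ((m - 1 - (1/2 + (fst p - 1/2) / (2 * snd p - 1)) * (m - 3)) / m))"
definition "zl m p = complex_of_real (1 - 2 * fst p) * cis (2 * pi * (- (1/2 + (snd p - 1/2) / (1 - 2 * fst p)) / m))"

definition sqz :: "real \<Rightarrow> real \<times> real \<Rightarrow> complex" where
  "sqz m p = (if snd p \<le> fst p then (if fst p + snd p \<le> 1 then zb m p else zr m p)
              else (if 1 \<le> fst p + snd p then zt m p else zl m p))"

abbreviation "SQ \<equiv> {0..1::real} \<times> {0..1::real}"

lemma zb_eq_zr: "snd p \<le> fst p \<Longrightarrow> fst p + snd p = 1 \<Longrightarrow> zb m p = zr m p"
proof -
  assume a: "snd p \<le> fst p" "fst p + snd p = 1"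
  show ?thesis
  proof (cases "fst p = 1/2")
    case True then have "snd p = 1/2" using a by simp
    then have e: "1 - 2 * snd p = 0" "2 * fst p - 1 = 0" using True by simp_all
    then show ?thesis unfolding zb_def zr_def e by simp
  next
    case False
    then have ne: "2 * fst p - 1 \<noteq> 0" by simp
    have y: "snd p = 1 - fst p" using a by simp
    have e1: "1 - 2 * snd p = 2 * fst p - 1" using y by simp
    have e2: "(fst p - 1/2) / (2 * fst p - 1) = 1/2" using ne by (simp add: field_simps)
    have e3: "(snd p - 1/2) / (2 * fst p - 1) = - 1/2" using ne y by (simp add: field_simps)
    show ?thesis unfolding zb_def zr_def e1 e2 e3 by simp
  qed
qed

lemma zr_eq_zt: "snd p = fst p \<Longrightarrow> 1 < fst p + snd p \<Longrightarrow> zr m p = zt m p"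
proof -
  assume a: "snd p = fst p" "1 < fst p + snd p"
  then have ne: "2 * fst p - 1 \<noteq> 0" by simp
  have e2: "(fst p - 1/2) / (2 * fst p - 1) = 1/2" using ne by (simp add: field_simps)
  have "1 + (1/2 + 1/2) = m - 1 - (1/2 + 1/2) * (m - 3)" by simp
  then show ?thesis unfolding zr_def zt_def a(1) e2 by simp
qed

lemma zb_eq_zl: "snd p = fst p \<Longrightarrow> fst p + snd p \<le> 1 \<Longrightarrow> zb m p = zl m p"
proof -
  assume a: "snd p = fst p" "fst p + snd p \<le> 1"
  show ?thesis
  proof (cases "fst p = 1/2")
    case True then have e: "1 - 2 * snd p = 0" "1 - 2 * fst p = 0" using a by simp_all
    then show ?thesis unfolding zb_def zl_def e by simp
  next
    case False
    then have ne: "1 - 2 * fst p \<noteq> 0" by simp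
    have e2: "(fst p - 1/2) / (1 - 2 * fst p) = - 1/2" using ne by (simp add: field_simps)
    show ?thesis unfolding zb_def zl_def a(1) e2 by simp
  qed
qed

lemma zt_eq_zl: "fst p < snd p \<Longrightarrow> fst p + snd p = 1 \<Longrightarrow> m \<noteq> 0 \<Longrightarrow> zt m p = zl m p"
proof -
  assume a: "fst p < snd p" "fst p + snd p = 1" and m: "m \<noteq> 0"
  then have ne: "1 - 2 * fst p \<noteq> 0" by simp
  have y: "snd p = 1 - fst p" using a by simp
  have e1: "2 * snd p - 1 = 1 - 2 * fst p" using y by simp
  have e2: "(fst p - 1/2) / (1 - 2 * fst p) = - 1/2" using ne by (simp add: field_simps)
  have e3: "(snd p - 1/2) / (1 - 2 * fst p) = 1/2" using ne y by (simp add: field_simps)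
  have "2 * pi * ((m - 1 - (1/2 + - 1/2) * (m - 3)) / m) = 2 * pi * (- (1/2 + 1/2) / m) + 2 * pi"
    using m by (simp add: field_simps)
  then show ?thesis unfolding zt_def zl_def e1 e2 e3 by (simp only: cis_add_2pi)
qed

lemma sqz_bot: "0 \<le> x \<Longrightarrow> x \<le> 1 \<Longrightarrow> sqz m (x, 0) = cis (2 * pi * (x / m))"
  by (simp add: sqz_def zb_def)

lemma sqz_right: "0 \<le> y \<Longrightarrow> y \<le> 1 \<Longrightarrow> sqz m (1, y) = cis (2 * pi * ((1 + y) / m))"
proof -
  assume y: "0 \<le> y" "y \<le> 1"
  have "sqz m (1, y) = zr m (1, y)"
    using zb_eq_zr[of "(1,y)" m] y by (auto simp: sqz_def)
  then show ?thesis by (simp add: zr_def)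
qed

lemma sqz_top: "0 \<le> x \<Longrightarrow> x \<le> 1 \<Longrightarrow> sqz m (x, 1) = cis (2 * pi * ((m - 1 - x * (m - 3)) / m))"
proof -
  assume x: "0 \<le> x" "x \<le> 1"
  have "sqz m (x, 1) = zt m (x, 1)"
    using zr_eq_zt[of "(x,1)" m] x by (auto simp: sqz_def)
  then show ?thesis by (simp add: zt_def)
qed

lemma sqz_left: "0 \<le> y \<Longrightarrow> y \<le> 1 \<Longrightarrow> m \<noteq> 0 \<Longrightarrow> sqz m (0, y) = cis (2 * pi * (- y / m))"
proof -
  assume y: "0 \<le> y" "y \<le> 1" and m: "m \<noteq> 0"
  have "sqz m (0, y) = zl m (0, y)"
  proof (cases "y = 0")
    case True then show ?thesis using zb_eq_zl[of "(0,y)" m] by (simp add: sqz_def)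
  next
    case False
    then show ?thesis using zt_eq_zl[of "(0,y)" m] y m by (auto simp: sqz_def)
  qed
  then show ?thesis by (simp add: zl_def)
qed

lemma norm_polar: "cmod (complex_of_real r * cis t) = \<bar>r\<bar>"
  by (simp add: norm_mult)

lemma sqz_norm: "cmod (sqz m p) = (if snd p \<le> fst p then (if fst p + snd p \<le> 1 then \<bar>1 - 2 * snd p\<bar> else \<bar>2 * fst p - 1\<bar>)
              else (if 1 \<le> fst p + snd p then \<bar>2 * snd p - 1\<bar> else \<bar>1 - 2 * fst p\<bar>))"
  unfolding sqz_def by (simp only: if_distrib[of cmod] zb_def zr_def zt_def zl_def norm_polar)

lemma sqz_norm_le: "p \<in> SQ \<Longrightarrow> cmod (sqz m p) \<le> 1"
  unfolding sqz_norm by (cases p) auto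

lemma sqz_norm_lt: "0 < fst p \<Longrightarrow> fst p < 1 \<Longrightarrow> 0 < snd p \<Longrightarrow> snd p < 1 \<Longrightarrow> cmod (sqz m p) < 1"
  unfolding sqz_norm by (cases p) auto

lemma sqz_cont: "m \<noteq> 0 \<Longrightarrow> continuous_on SQ (sqz m)"
proof -
  assume m: "m \<noteq> 0"
  define Tb where "Tb = SQ \<inter> {p. snd p \<le> fst p \<and> fst p + snd p \<le> 1}"
  define Tr where "Tr = SQ \<inter> {p. snd p \<le> fst p \<and> 1 \<le> fst p + snd p}"
  define Tt where "Tt = SQ \<inter> {p. fst p \<le> snd p \<and> 1 \<le> fst p + snd p}"
  define Tl where "Tl = SQ \<inter> {p. fst p \<le> snd p \<and> fst p + snd p \<le> 1}"
  have cl: "closed Tb" "closed Tr" "closed Tt" "closed Tl"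
    unfolding Tb_def Tr_def Tt_def Tl_def
    by (intro closed_Int closed_Times closed_atLeastAtMost closed_Collect_conj closed_Collect_le continuous_intros; simp)+
  have un: "SQ = Tb \<union> Tr \<union> Tt \<union> Tl" unfolding Tb_def Tr_def Tt_def Tl_def by auto
  have cb: "continuous_on Tb (zb m)"
    unfolding zb_def[abs_def]
    by (rule cont_polar) (use m in \<open>auto intro!: continuous_intros simp: Tb_def\<close>)
  have cr: "continuous_on Tr (zr m)"
    unfolding zr_def[abs_def]
    by (rule cont_polar) (use m in \<open>auto intro!: continuous_intros simp: Tr_def\<close>)
  have ct: "continuous_on Tt (zt m)"
    unfolding zt_def[abs_def]
    by (rule cont_polar) (use m in \<open>auto intro!: continuous_intros simp: Tt_def\<close>)
  have cl4: "continuous_on Tl (zl m)"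
    unfolding zl_def[abs_def]
    by (rule cont_polar) (use m in \<open>auto intro!: continuous_intros simp: Tl_def\<close>)
  have "continuous_on Tb (sqz m)"
    using cb by (rule continuous_on_eq) (auto simp: Tb_def sqz_def)
  moreover have "continuous_on Tr (sqz m)"
    using cr by (rule continuous_on_eq) (auto simp: Tr_def sqz_def zb_eq_zr)
  moreover have "continuous_on Tt (sqz m)"
  proof (rule continuous_on_eq[OF ct])
    fix p assume p: "p \<in> Tt"
    show "zt m p = sqz m p"
    proof (cases "snd p \<le> fst p")
      case True
      then have e: "snd p = fst p" using p by (auto simp: Tt_def)
      show ?thesis
      proof (cases "fst p + snd p \<le> 1")
        case True
        then have "fst p = 1/2" "snd p = 1/2" using p e by (auto simp: Tt_def)
        then have e2: "1 - 2 * snd p = 0" "2 * snd p - 1 = 0" by simp_all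
        have "sqz m p = zb m p" using e True by (simp add: sqz_def)
        then show ?thesis unfolding zb_def zt_def e2 by simp
      next
        case False
        then show ?thesis using e zr_eq_zt[of p m] by (simp add: sqz_def)
      qed
    next
      case False then show ?thesis using p by (simp add: sqz_def Tt_def)
    qed
  qed
  moreover have "continuous_on Tl (sqz m)"
  proof (rule continuous_on_eq[OF cl4])
    fix p assume p: "p \<in> Tl"
    show "zl m p = sqz m p"
    proof (cases "snd p \<le> fst p")
      case True
      then have e: "snd p = fst p" using p by (auto simp: Tl_def)
      then show ?thesis using p zb_eq_zl[of p m] by (simp add: sqz_def Tl_def)
    next
      case False
      then show ?thesis using p zt_eq_zl[of p m] m by (auto simp: sqz_def Tl_def)
    qed
  qed
  ultimately show ?thesis unfolding un
    by (intro continuous_on_closed_Un closed_Un cl) auto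
qed

lemma qtop_istop: "istopology (\<lambda>U. U \<subseteq> f ` topspace S \<and> openin S {x \<in> topspace S. f x \<in> U})"
proof -
  have int: "U \<inter> V \<subseteq> f ` topspace S \<and> openin S {x \<in> topspace S. f x \<in> U \<inter> V}"
    if a: "U \<subseteq> f ` topspace S \<and> openin S {x \<in> topspace S. f x \<in> U}"
    "V \<subseteq> f ` topspace S \<and> openin S {x \<in> topspace S. f x \<in> V}" for U V
  proof -
    have "{x \<in> topspace S. f x \<in> U \<inter> V} = {x \<in> topspace S. f x \<in> U} \<inter> {x \<in> topspace S. f x \<in> V}" by auto
    then show ?thesis using a by auto
  qed
  have un: "\<Union>K \<subseteq> f ` topspace S \<and> openin S {x \<in> topspace S. f x \<in> \<Union>K}"
    if a: "\<forall>U\<in>K. U \<subseteq> f ` topspace S \<and> openin S {x \<in> topspace S. f x \<in> U}" for K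
  proof -
    have "{x \<in> topspace S. f x \<in> \<Union>K} = \<Union>((\<lambda>U. {x \<in> topspace S. f x \<in> U}) ` K)" by auto
    then show ?thesis using a by (auto intro!: openin_Union)
  qed
  show ?thesis unfolding istopology_def using int un by blast
qed

lemma openin_qtop: "openin (qtop S f) U \<longleftrightarrow> U \<subseteq> f ` topspace S \<and> openin S {x \<in> topspace S. f x \<in> U}"
  unfolding qtop_def by (subst topology_inverse'[OF qtop_istop]) simp

lemma topspace_qtop: "topspace (qtop S f) = f ` topspace S"
proof -
  have "openin (qtop S f) (f ` topspace S)" unfolding openin_qtop
    by (auto intro: openin_subopen[THEN iffD2] simp: openin_topspace)
  then show ?thesis using openin_subset[of "qtop S f"] openin_qtop
    by (metis openin_topspace subset_antisym openin_subset)
qed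

lemma cont_qtop: "continuous_map S (qtop S f) f"
  unfolding continuous_map_def topspace_qtop openin_qtop by auto

lemma cont_from_qtop:
  assumes "continuous_map S Y (\<lambda>x. g (f x))"
  shows "continuous_map (qtop S f) Y g"
  unfolding continuous_map_def topspace_qtop
proof (intro conjI allI impI)
  show "g \<in> f ` topspace S \<rightarrow> topspace Y" using assms by (auto simp: continuous_map_def)
next
  fix V assume V: "openin Y V"
  have "{x \<in> topspace S. f x \<in> {y \<in> f ` topspace S. g y \<in> V}} = {x \<in> topspace S. g (f x) \<in> V}" by auto
  then show "openin (qtop S f) {y \<in> f ` topspace S. g y \<in> V}"
    unfolding openin_qtop using assms V by (auto simp: continuous_map_def)
qed

context cx
begin

abbreviation "PC \<equiv> pre_carrier A R phi"
abbreviation "PT \<equiv> pre_top A R phi"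
abbreviation "XX \<equiv> cayley2 A R phi"
abbreviation "cn \<equiv> canon A R phi"

definition "preP U \<longleftrightarrow> U \<subseteq> PC
      \<and> (\<forall>g l. openin (top_of_set {0..1}) {s \<in> {0..1}. Edge g l s \<in> U})
      \<and> (\<forall>g c. openin (top_of_set (cball 0 1)) {z \<in> cball 0 1. Cell g c z \<in> U})"

lemma pre_istop: "istopology preP"
  unfolding istopology_def
proof (intro conjI allI impI)
  fix U V assume a: "preP U" "preP V"
  have e: "{s \<in> {0..1}. Edge g l s \<in> U \<inter> V} = {s \<in> {0..1}. Edge g l s \<in> U} \<inter> {s \<in> {0..1}. Edge g l s \<in> V}" for g l
    by auto
  have c: "{z \<in> cball 0 1. Cell g c z \<in> U \<inter> V} = {z \<in> cball 0 1. Cell g c z \<in> U} \<inter> {z \<in> cball 0 1. Cell g c z \<in> V}" for g c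
    by auto
  show "preP (U \<inter> V)" using a unfolding preP_def e c by auto
next
  fix K assume a: "\<forall>U\<in>K. preP U"
  have e: "{s \<in> {0..1}. Edge g l s \<in> \<Union>K} = \<Union>((\<lambda>U. {s \<in> {0..1}. Edge g l s \<in> U}) ` K)" for g l
    by auto
  have c: "{z \<in> cball 0 1. Cell g c z \<in> \<Union>K} = \<Union>((\<lambda>U. {z \<in> cball 0 1. Cell g c z \<in> U}) ` K)" for g c
    by auto
  show "preP (\<Union>K)" using a unfolding preP_def e c by (auto intro!: openin_Union)
qed

lemma openin_pre: "openin PT U \<longleftrightarrow> preP U"
proof -
  have "pre_top A R phi = topology preP" unfolding pre_top_def preP_def ..
  then show ?thesis using pre_istop by simp
qed

lemma topspace_pre: "topspace PT = PC"
proof -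
  have e: "{s \<in> {0..1::real}. Edge g l s \<in> PC} = (if g \<in> VV \<and> l \<in> GG then {0..1} else {})" for g l
    by (auto simp: pre_carrier_def)
  have c: "{z \<in> cball (0::complex) 1. Cell g c z \<in> PC} = (if g \<in> VV \<and> c \<in> cells A R then cball 0 1 else {})" for g c
    by (auto simp: pre_carrier_def)
  have "preP PC" unfolding preP_def e c by simp
  then have "openin PT PC" by (simp add: openin_pre)
  moreover have "\<And>U. openin PT U \<Longrightarrow> U \<subseteq> PC" by (simp add: openin_pre preP_def)
  ultimately show ?thesis by (metis openin_subset openin_topspace subset_antisym)
qed

lemma topspace_X: "topspace XX = cn ` PC"
  by (simp add: cayley2_def topspace_qtop topspace_pre)

lemma cont_canon: "continuous_map PT XX cn"
  unfolding cayley2_def by (rule cont_qtop)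

lemma cont_from_X: "continuous_map PT Y (\<lambda>x. g (cn x)) \<Longrightarrow> continuous_map XX Y g"
  unfolding cayley2_def by (rule cont_from_qtop)

lemma cont_into_cell:
  assumes Z: "continuous_map X (top_of_set (cball 0 1)) Z" and g: "g \<in> VV" and c: "c \<in> cells A R"
  shows "continuous_map X PT (\<lambda>x. Cell g c (Z x))"
  unfolding continuous_map_def topspace_pre
proof (intro conjI allI impI)
  have "Z x \<in> cball 0 1" if "x \<in> topspace X" for x
    using Z that by (auto simp: continuous_map_def)
  then show "(\<lambda>x. Cell g c (Z x)) \<in> topspace X \<rightarrow> PC" using g c by (auto simp: pre_carrier_def)
next
  fix U assume "openin PT U"
  then have o: "openin (top_of_set (cball 0 1)) {z \<in> cball 0 1. Cell g c z \<in> U}"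
    by (simp add: openin_pre preP_def)
  have zin: "Z x \<in> cball 0 1" if "x \<in> topspace X" for x
    using Z that by (auto simp: continuous_map_def)
  have "{x \<in> topspace X. Cell g c (Z x) \<in> U} = {x \<in> topspace X. Z x \<in> {z \<in> cball 0 1. Cell g c z \<in> U}}"
    using zin by auto
  moreover have "openin X {x \<in> topspace X. Z x \<in> {z \<in> cball 0 1. Cell g c z \<in> U}}"
    using Z o unfolding continuous_map_def by blast
  ultimately show "openin X {x \<in> topspace X. Cell g c (Z x) \<in> U}" by simp
qed

lemma cont_into_edge:
  assumes Z: "continuous_map X (top_of_set {0..1}) Z" and g: "g \<in> VV" and l: "l \<in> GG"
  shows "continuous_map X PT (\<lambda>x. Edge g l (Z x))"
  unfolding continuous_map_def topspace_pre
proof (intro conjI allI impI)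
  have "Z x \<in> {0..1}" if "x \<in> topspace X" for x
    using Z that by (auto simp: continuous_map_def)
  then show "(\<lambda>x. Edge g l (Z x)) \<in> topspace X \<rightarrow> PC" using g l by (auto simp: pre_carrier_def)
next
  fix U assume "openin PT U"
  then have o: "openin (top_of_set {0..1}) {s \<in> {0..1}. Edge g l s \<in> U}"
    by (simp add: openin_pre preP_def)
  have zin: "Z x \<in> {0..1}" if "x \<in> topspace X" for x
    using Z that by (auto simp: continuous_map_def)
  have "{x \<in> topspace X. Edge g l (Z x) \<in> U} = {x \<in> topspace X. Z x \<in> {s \<in> {0..1}. Edge g l s \<in> U}}"
    using zin by auto
  moreover have "openin X {x \<in> topspace X. Z x \<in> {s \<in> {0..1}. Edge g l s \<in> U}}"
    using Z o unfolding continuous_map_def by blast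
  ultimately show "openin X {x \<in> topspace X. Edge g l (Z x) \<in> U}" by simp
qed

lemma cont_from_pre:
  assumes E: "\<And>g l. g \<in> VV \<Longrightarrow> l \<in> GG \<Longrightarrow> continuous_map (top_of_set {0..1}) Y (\<lambda>s. F (Edge g l s))"
    and C: "\<And>g c. g \<in> VV \<Longrightarrow> c \<in> cells A R \<Longrightarrow> continuous_map (top_of_set (cball 0 1)) Y (\<lambda>z. F (Cell g c z))"
    and V: "\<And>g. g \<in> VV \<Longrightarrow> F (Vert g) \<in> topspace Y"
  shows "continuous_map PT Y F"
  unfolding continuous_map_def topspace_pre
proof (intro conjI allI impI)
  show "F \<in> PC \<rightarrow> topspace Y"
  proof
    fix p assume "p \<in> PC"
    then show "F p \<in> topspace Y"
      unfolding pre_carrier_def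
      using V E C by (auto simp: continuous_map_def Pi_iff)
  qed
next
  fix W assume W: "openin Y W"
  let ?U = "{x \<in> PC. F x \<in> W}"
  have e: "openin (top_of_set {0..1}) {s \<in> {0..1}. Edge g l s \<in> ?U}" for g l
  proof (cases "g \<in> VV \<and> l \<in> GG")
    case True
    have "{s \<in> {0..1}. Edge g l s \<in> ?U} = {s \<in> topspace (top_of_set {0..1}). F (Edge g l s) \<in> W}"
      using True by (auto simp: pre_carrier_def)
    then show ?thesis using E[of g l] True W by (simp add: continuous_map_def)
  next
    case False
    then have "{s \<in> {0..1}. Edge g l s \<in> ?U} = {}" by (auto simp: pre_carrier_def)
    then show ?thesis by (metis openin_empty)
  qed
  have c: "openin (top_of_set (cball 0 1)) {z \<in> cball 0 1. Cell g c z \<in> ?U}" for g c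
  proof (cases "g \<in> VV \<and> c \<in> cells A R")
    case True
    have "{z \<in> cball 0 1. Cell g c z \<in> ?U} = {z \<in> topspace (top_of_set (cball 0 1)). F (Cell g c z) \<in> W}"
      using True by (auto simp: pre_carrier_def)
    then show ?thesis using C[of g c] True W by (simp add: continuous_map_def)
  next
    case False
    then have "{z \<in> cball 0 1. Cell g c z \<in> ?U} = {}" by (auto simp: pre_carrier_def)
    then show ?thesis by (metis openin_empty)
  qed
  show "openin PT ?U" unfolding openin_pre preP_def using e c by auto
qed

end

context cx
begin

definition sqp :: "'a gword set \<Rightarrow> 'a \<Rightarrow> real \<times> real \<Rightarrow> 'a xpt" where
  "sqp g b p = cn (Cell g (ConjCell b) (sqz (real (length (conjrel phi b))) p))"

lemma length_conjrel: "length (conjrel phi b) = length (phi b) + 3"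
  by (simp add: conjrel_def)

lemma cn_cis: "cn (Cell g (ConjCell b) (cis t)) = bdry A R phi g (conjrel phi b) (cis t)"
  by (simp add: canon_def cellword_def)

lemma ConjCell_cells: "b \<in> A \<Longrightarrow> ConjCell b \<in> cells A R"
  by (simp add: cells_def)

context
  fixes g b assumes g: "g \<in> VV" and b: "b \<in> A" and pb: "over A (phi b)"
begin

lemma wover: "over GG (conjrel phi b)" using b pb by (rule conjrel_over)
lemma wrel: "ga g (conjrel phi b) = g" using g conjrel_rel[OF b] by (rule gapp_rel)

lemma sqp_bot: "0 \<le> x \<Longrightarrow> x \<le> 1 \<Longrightarrow> sqp g b (x, 0) = lpt g (L b, False) x"
proof -
  assume x: "0 \<le> x" "x \<le> 1"
  let ?w = "conjrel phi b"
  have "sqp g b (x, 0) = bdry A R phi g ?w (cis (2 * pi * ((real 0 + x) / real (length ?w))))"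
    unfolding sqp_def using x by (simp add: sqz_bot cn_cis)
  also have "\<dots> = lpt (ga g (take 0 ?w)) (?w ! 0) x"
    by (rule bdry_cis'[OF g wover wrel]) (use x in \<open>auto simp: conjrel_def\<close>)
  finally show ?thesis using g by (simp add: gapp_Nil conjrel_def)
qed

lemma sqp_right: "0 \<le> y \<Longrightarrow> y \<le> 1 \<Longrightarrow> sqp g b (1, y) = canon_edge A R phi (ga g [(L b, False)]) T y"
proof -
  assume y: "0 \<le> y" "y \<le> 1"
  let ?w = "conjrel phi b"
  have "sqp g b (1, y) = bdry A R phi g ?w (cis (2 * pi * ((real 1 + y) / real (length ?w))))"
    unfolding sqp_def using y by (simp add: sqz_right cn_cis)
  also have "\<dots> = lpt (ga g (take 1 ?w)) (?w ! 1) y"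
    by (rule bdry_cis'[OF g wover wrel]) (use y in \<open>auto simp: conjrel_def\<close>)
  finally show ?thesis by (simp add: conjrel_def lpt_def)
qed

lemma sqp_left: "0 \<le> y \<Longrightarrow> y \<le> 1 \<Longrightarrow> sqp g b (0, y) = canon_edge A R phi g T y"
proof -
  assume y: "0 \<le> y" "y \<le> 1"
  let ?w = "conjrel phi b"
  let ?m = "length ?w"
  have m: "?m = length (phi b) + 3" by (rule length_conjrel)
  have m0: "real ?m \<noteq> 0" using m by simp
  have c: "cis (2 * pi * (- y / real ?m)) = cis (2 * pi * ((real (?m - 1) + (1 - y)) / real ?m))"
  proof -
    have e: "2 * pi * ((real (?m - 1) + (1 - y)) / real ?m) = 2 * pi * (- y / real ?m) + 2 * pi"
      using m by (simp add: field_simps)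
    show ?thesis unfolding e by (rule cis_add_2pi[symmetric])
  qed
  have "sqp g b (0, y) = bdry A R phi g ?w (cis (2 * pi * ((real (?m - 1) + (1 - y)) / real ?m)))"
    using m unfolding sqp_def sqz_left[OF y, of "real ?m", OF m0] cn_cis c by simp
  also have "\<dots> = lpt (ga g (take (?m - 1) ?w)) (?w ! (?m - 1)) (1 - y)"
    by (rule bdry_cis'[OF g wover wrel]) (use y m in auto)
  also have "?w ! (?m - 1) = (T, True)" by (simp add: conjrel_def nth_append)
  also have "ga (ga g (take (?m - 1) ?w)) [(T, True)] = g"
  proof -
    have "take (?m - 1) ?w @ [(T, True)] = ?w" by (simp add: conjrel_def)
    then show ?thesis using g wover wrel by (metis gapp_assoc over_take)
  qed
  ultimately show ?thesis by (simp add: lpt_def)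
qed

lemma sqp_top: "0 \<le> x \<Longrightarrow> x \<le> 1 \<Longrightarrow> sqp g b (x, 1) = pathpt (ga g [(T, False)]) (liftw (phi b)) x"
proof -
  assume x: "0 \<le> x" "x \<le> 1"
  let ?w = "conjrel phi b"
  let ?W = "liftw (phi b)"
  let ?N = "length (phi b)"
  let ?m = "length ?w"
  have m: "?m = ?N + 3" by (rule length_conjrel)
  have Wo: "over GG ?W" using pb by (rule over_liftw)
  have u: "ga g [(T, False)] \<in> VV" using g by (simp add: gapp_verts)
  have top: "sqp g b (x, 1) = bdry A R phi g ?w (cis (2 * pi * ((real ?m - 1 - x * (real ?m - 3)) / real ?m)))"
    unfolding sqp_def using x by (simp add: sqz_top cn_cis)
  show ?thesis
  proof (cases "?N = 0")
    case True
    then have m3: "?m = 3" using m by simp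
    have "sqp g b (x, 1) = bdry A R phi g ?w (cis (2 * pi * ((real 2 + 0) / real ?m)))"
      unfolding top m3 by simp
    also have "\<dots> = lpt (ga g (take 2 ?w)) (?w ! 2) 0"
      by (rule bdry_cis'[OF g wover wrel]) (use m3 in auto)
    also have "\<dots> = Vert (ga g (take 2 ?w))"
      using g wover m3 by (intro lpt_0) (simp_all add: gapp_verts over_take over_nth)
    also have "take 2 ?w = [(L b, False), (T, False)]" by (simp add: conjrel_def)
    also have "ga g [(L b, False), (T, False)] = ga g [(T, False)]"
      using gapp_conj[OF g b, of False] True by (simp add: phiL_def liftw_def)
    finally show ?thesis using True by (simp add: pathpt_def liftw_def)
  next
    case False
    then have Wne: "?W \<noteq> []" by (simp add: liftw_def)
    obtain j where j: "j < length ?W" "real j \<le> x * real (length ?W)" "x * real (length ?W) \<le> real j + 1"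
      using pathpt_exists_j[OF Wne x] by blast
    have jN: "j < ?N" using j by simp
    define k where "k = ?N + 1 - j"
    define s where "s = 1 - (x * real ?N - real j)"
    have ks: "real ?m - 1 - x * (real ?m - 3) = real k + s"
      using m jN by (simp add: k_def s_def of_nat_diff)
    have k: "k < ?m" using m by (simp add: k_def)
    have s: "0 \<le> s" "s \<le> 1" using j by (auto simp: s_def)
    have "sqp g b (x, 1) = lpt (ga g (take k ?w)) (?w ! k) s"
      unfolding top ks by (rule bdry_cis'[OF g wover wrel k s])
    also have "?w ! k = flipl (?W ! j)"
    proof -
      have "k = 2 + (?N - 1 - j)" using jN by (simp add: k_def)
      moreover have "?N - 1 - j < ?N" using jN by simp
      ultimately have "?w ! k = inv_word ?W ! (?N - 1 - j)"
        by (simp add: conjrel_def nth_append)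
      also have "\<dots> = flipl (?W ! j)" using jN by (simp add: inv_word_nth)
      finally show ?thesis .
    qed
    also have "take k ?w = [(L b, False), (T, False)] @ inv_word (drop (Suc j) ?W)"
    proof -
      have "k = 2 + (?N - 1 - j)" using jN by (simp add: k_def)
      then have "take k ?w = [(L b, False), (T, False)] @ take (?N - 1 - j) (inv_word ?W)"
        using jN by (simp add: conjrel_def)
      also have "take (?N - 1 - j) (inv_word ?W) = inv_word (drop (Suc j) ?W)"
        using jN by (simp add: take_inv_word)
      finally show ?thesis .
    qed
    also have "ga g ([(L b, False), (T, False)] @ inv_word (drop (Suc j) ?W)) = ga (ga (ga g [(T, False)]) (take j ?W)) [?W ! j]"
    proof -
      have "geq QQ ([] @ [(L b, False), (T, False)] @ inv_word (drop (Suc j) ?W))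
                   ([] @ ((T, False) # ?W) @ inv_word (drop (Suc j) ?W))"
        using geq_conj[OF b, of False] by (intro geq_app) (simp add: phiL_def)
      then have "ga g ([(L b, False), (T, False)] @ inv_word (drop (Suc j) ?W)) = ga g (((T, False) # ?W) @ inv_word (drop (Suc j) ?W))"
        by (simp add: gapp_geq)
      also have "((T, False) # ?W) @ inv_word (drop (Suc j) ?W) = ((T, False) # take (Suc j) ?W) @ drop (Suc j) ?W @ inv_word (drop (Suc j) ?W) @ []"
        by simp
      also have "ga g \<dots> = ga g (((T, False) # take (Suc j) ?W) @ [])"
        by (rule gapp_geq, rule geq_cancel_word)
      also have "\<dots> = ga (ga (ga g [(T, False)]) (take j ?W)) [?W ! j]"
        using g Wo j by (simp add: gapp_assoc over_take take_Suc_conv_app_nth gapp_verts)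
      finally show ?thesis .
    qed
    also have "lpt (ga (ga (ga g [(T, False)]) (take j ?W)) [?W ! j]) (flipl (?W ! j)) s = lpt (ga (ga g [(T, False)]) (take j ?W)) (?W ! j) (x * real ?N - real j)"
      using lpt_rev[of "ga (ga g [(T, False)]) (take j ?W)" "?W ! j" "x * real ?N - real j"] u Wo j
      by (simp add: s_def gapp_verts over_take over_nth)
    also have "\<dots> = pathpt (ga g [(T, False)]) ?W x"
      using pathpt_any[OF u Wo j(1)] j by simp
    finally show ?thesis .
  qed
qed

lemma sqp_interior: "0 < x \<Longrightarrow> x < 1 \<Longrightarrow> 0 < y \<Longrightarrow> y < 1 \<Longrightarrow>
   \<exists>z. cmod z < 1 \<and> sqp g b (x, y) = Cell g (ConjCell b) z"
proof -
  assume "0 < x" "x < 1" "0 < y" "y < 1"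
  then have "cmod (sqz (real (length (conjrel phi b))) (x, y)) < 1" by (intro sqz_norm_lt) auto
  then show ?thesis by (auto simp: sqp_def canon_def)
qed

lemma sqp_cont: "continuous_map (top_of_set SQ) XX (sqp g b)"
proof -
  let ?m = "real (length (conjrel phi b))"
  have m: "?m \<noteq> 0" by (simp add: conjrel_def)
  have "continuous_map (top_of_set SQ) (top_of_set (cball 0 1)) (sqz ?m)"
    using sqz_cont[OF m] sqz_norm_le by (auto simp: continuous_map_in_subtopology)
  then have "continuous_map (top_of_set SQ) PT (\<lambda>p. Cell g (ConjCell b) (sqz ?m p))"
    using g b by (intro cont_into_cell) (auto simp: cells_def)
  then show ?thesis unfolding sqp_def[abs_def]
    using cont_canon by (rule continuous_map_compose[unfolded o_def])
qed

end

end

definition vl :: "'a set \<Rightarrow> 'a gen \<times> bool \<Rightarrow> bool" where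
  "vl A c \<longleftrightarrow> (\<exists>b\<in>A. fst c = L b)"

locale cx2 = cx +
  assumes pA: "\<forall>b\<in>A. over A (phi b)"
begin

definition sq :: "'a gword set \<Rightarrow> 'a gen \<times> bool \<Rightarrow> real \<times> real \<Rightarrow> 'a xpt" where
  "sq g c p = (case fst c of L b \<Rightarrow> (if snd c then sqp (ga g [c]) b (1 - fst p, snd p) else sqp g b p) | T \<Rightarrow> Vert g)"

lemma vl_cases: "vl A c \<Longrightarrow> (\<And>b e. c = (L b, e) \<Longrightarrow> b \<in> A \<Longrightarrow> P) \<Longrightarrow> P"
  by (cases c) (auto simp: vl_def)

lemma vl_GG: "vl A c \<Longrightarrow> fst c \<in> GG"
  by (auto simp: vl_def)

lemma vl_phiL_over: "vl A c \<Longrightarrow> over GG (phiL c)"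
  by (cases c) (auto simp: vl_def intro!: phiL_over pA[rule_format])

lemma vl_phiL_nth: "vl A c \<Longrightarrow> j < length (phiL c) \<Longrightarrow> vl A (phiL c ! j)"
proof -
  assume c: "vl A c" and j: "j < length (phiL c)"
  obtain b e where be: "c = (L b, e)" "b \<in> A" using c by (rule vl_cases)
  have o: "over A (phi b)" using pA be by auto
  have "\<forall>x \<in> set (phiL c). \<exists>b'\<in>A. fst x = L b'"
    using o unfolding be phiL_def
    by (auto simp: over_def liftw_def inv_word_def flipl_def)
  then show ?thesis using j by (auto simp: vl_def)
qed

lemma ga_neg_back: "g \<in> VV \<Longrightarrow> fst c \<in> GG \<Longrightarrow> snd c \<Longrightarrow> ga (ga g [c]) [(fst c, False)] = g"
proof -
  assume g: "g \<in> VV" and l: "fst c \<in> GG" and e: "snd c"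
  have "ga (ga g [c]) [(fst c, False)] = ga g ([] @ [(fst c, True), (fst c, \<not> True)] @ [])"
    using g l e by (cases c) (simp add: gapp_assoc)
  also have "\<dots> = g" using gapp_cancel1[OF g, of "[]" "fst c" True "[]"] gapp_Nil[OF g] by simp
  finally show ?thesis .
qed

context
  fixes g c assumes g: "g \<in> VV" and c: "vl A c"
begin

lemma sq_bot: "0 \<le> x \<Longrightarrow> x \<le> 1 \<Longrightarrow> sq g c (x, 0) = lpt g c x"
proof -
  assume x: "0 \<le> x" "x \<le> 1"
  obtain b e where be: "c = (L b, e)" "b \<in> A" using c by (rule vl_cases)
  have o: "over A (phi b)" using pA be by auto
  show ?thesis
  proof (cases e)
    case False then show ?thesis using x be sqp_bot[OF g be(2) o] by (simp add: sq_def)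
  next
    case True
    have h: "ga g [c] \<in> VV" using g be by (simp add: gapp_verts)
    have "sq g c (x, 0) = lpt (ga g [c]) (L b, False) (1 - x)"
      using x be True sqp_bot[OF h be(2) o] by (simp add: sq_def)
    also have "\<dots> = lpt (ga (ga g [c]) [(L b, False)]) (L b, True) (1 - (1 - x))"
      using lpt_rev[OF h, of "(L b, False)"] be by (simp add: flipl_def)
    also have "ga (ga g [c]) [(L b, False)] = g" using ga_neg_back[OF g, of c] be True by simp
    finally show ?thesis using be True by simp
  qed
qed

lemma sq_left: "0 \<le> y \<Longrightarrow> y \<le> 1 \<Longrightarrow> sq g c (0, y) = canon_edge A R phi g T y"
proof -
  assume y: "0 \<le> y" "y \<le> 1"
  obtain b e where be: "c = (L b, e)" "b \<in> A" using c by (rule vl_cases)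
  have o: "over A (phi b)" using pA be by auto
  show ?thesis
  proof (cases e)
    case False then show ?thesis using y be sqp_left[OF g be(2) o] by (simp add: sq_def)
  next
    case True
    have h: "ga g [c] \<in> VV" using g be by (simp add: gapp_verts)
    have "sq g c (0, y) = canon_edge A R phi (ga (ga g [c]) [(L b, False)]) T y"
      using y be True sqp_right[OF h be(2) o] by (simp add: sq_def)
    also have "ga (ga g [c]) [(L b, False)] = g" using ga_neg_back[OF g, of c] be True by simp
    finally show ?thesis .
  qed
qed

lemma sq_right: "0 \<le> y \<Longrightarrow> y \<le> 1 \<Longrightarrow> sq g c (1, y) = canon_edge A R phi (ga g [c]) T y"
proof -
  assume y: "0 \<le> y" "y \<le> 1"
  obtain b e where be: "c = (L b, e)" "b \<in> A" using c by (rule vl_cases)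
  have o: "over A (phi b)" using pA be by auto
  show ?thesis
  proof (cases e)
    case False then show ?thesis using y be sqp_right[OF g be(2) o] by (simp add: sq_def)
  next
    case True
    have h: "ga g [c] \<in> VV" using g be by (simp add: gapp_verts)
    show ?thesis using y be True sqp_left[OF h be(2) o] by (simp add: sq_def)
  qed
qed

lemma sq_top: "0 \<le> x \<Longrightarrow> x \<le> 1 \<Longrightarrow> sq g c (x, 1) = pathpt (ga g [(T, False)]) (phiL c) x"
proof -
  assume x: "0 \<le> x" "x \<le> 1"
  obtain b e where be: "c = (L b, e)" "b \<in> A" using c by (rule vl_cases)
  have o: "over A (phi b)" using pA be by auto
  show ?thesis
  proof (cases e)
    case False then show ?thesis using x be sqp_top[OF g be(2) o] by (simp add: sq_def phiL_def)
  next
    case True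
    let ?h = "ga g [c]"
    let ?W = "liftw (phi b)"
    have h: "?h \<in> VV" using g be by (simp add: gapp_verts)
    have u: "ga ?h [(T, False)] \<in> VV" using h by (simp add: gapp_verts)
    have Wo: "over GG ?W" using o by (rule over_liftw)
    have "sq g c (x, 1) = pathpt (ga ?h [(T, False)]) ?W (1 - x)"
      using x be True sqp_top[OF h be(2) o] by (simp add: sq_def)
    also have "\<dots> = pathpt (ga (ga ?h [(T, False)]) ?W) (inv_word ?W) x"
      by (rule pathpt_rev[OF u Wo x])
    also have "ga (ga ?h [(T, False)]) ?W = ga g [(T, False)]"
    proof -
      have "ga (ga ?h [(T, False)]) ?W = ga ?h ((T, False) # phiL (L b, False))"
        using h by (simp add: gapp_assoc phiL_def)
      also have "\<dots> = ga ?h [(L b, False), (T, False)]" using gapp_conj[OF h be(2)] by simp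
      also have "\<dots> = ga (ga ?h [(L b, False)]) [(T, False)]" using h be by (simp add: gapp_assoc)
      also have "ga ?h [(L b, False)] = g" using ga_neg_back[OF g, of c] be True by simp
      finally show ?thesis .
    qed
    finally show ?thesis using be True by (simp add: phiL_def)
  qed
qed

lemma sq_interior: "0 < x \<Longrightarrow> x < 1 \<Longrightarrow> 0 < y \<Longrightarrow> y < 1 \<Longrightarrow>
   \<exists>h b z. h \<in> VV \<and> lev h = lev g \<and> b \<in> A \<and> cmod z < 1 \<and> sq g c (x, y) = Cell h (ConjCell b) z"
proof -
  assume xy: "0 < x" "x < 1" "0 < y" "y < 1"
  obtain b e where be: "c = (L b, e)" "b \<in> A" using c by (rule vl_cases)
  have o: "over A (phi b)" using pA be by auto
  show ?thesis
  proof (cases e)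
    case False then show ?thesis using xy be sqp_interior[OF g be(2) o] g by (simp add: sq_def) blast
  next
    case True
    have h: "ga g [c] \<in> VV" using g be by (simp add: gapp_verts)
    have l: "lev (ga g [c]) = lev g" using g be by (simp add: lev_gapp)
    show ?thesis using xy be True sqp_interior[OF h be(2) o, of "1 - x" y] h l by (simp add: sq_def) blast
  qed
qed

lemma sq_cont: "continuous_map (top_of_set SQ) XX (sq g c)"
proof -
  obtain b e where be: "c = (L b, e)" "b \<in> A" using c by (rule vl_cases)
  have o: "over A (phi b)" using pA be by auto
  show ?thesis
  proof (cases e)
    case False
    have "continuous_map (top_of_set SQ) XX (sqp g b)" by (rule sqp_cont[OF g be(2) o])
    then show ?thesis by (rule continuous_map_eq) (simp add: sq_def be False)
  next
    case True
    have h: "ga g [c] \<in> VV" using g be by (simp add: gapp_verts)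
    have f: "continuous_map (top_of_set SQ) (top_of_set SQ) (\<lambda>p. (1 - fst p, snd p))"
      by (auto simp: continuous_map_in_subtopology intro!: continuous_intros)
    have "continuous_map (top_of_set SQ) XX (\<lambda>p. sqp (ga g [c]) b (1 - fst p, snd p))"
      using continuous_map_compose[OF f sqp_cont[OF h be(2) o]] by (simp add: o_def)
    then show ?thesis by (rule continuous_map_eq) (simp add: sq_def be True)
  qed
qed

end

lemma tray_le1: "g \<in> VV \<Longrightarrow> 0 \<le> y \<Longrightarrow> y \<le> 1 \<Longrightarrow> tray A R phi g y = canon_edge A R phi g T y"
proof -
  assume g: "g \<in> VV" and y: "0 \<le> y" "y \<le> 1"
  show ?thesis
  proof (cases "y = 1")
    case True then show ?thesis using g by (simp add: tray_def canon_def canon_edge_def gstep_eq)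
  next
    case False
    then have "\<lfloor>y\<rfloor> = 0" using y by (simp add: floor_eq_iff)
    then show ?thesis using g by (simp add: tray_def canon_def gapp_Nil)
  qed
qed

lemma tray_shift: "g \<in> VV \<Longrightarrow> 1 \<le> y \<Longrightarrow> tray A R phi g y = tray A R phi (ga g [(T, False)]) (y - 1)"
proof -
  assume g: "g \<in> VV" and y: "1 \<le> y"
  have f: "\<lfloor>y - 1\<rfloor> = \<lfloor>y\<rfloor> - 1" by simp
  have fl1: "\<lfloor>y\<rfloor> \<ge> 1" using y by (simp add: le_floor_iff)
  have k: "nat \<lfloor>y\<rfloor> = Suc (nat \<lfloor>y - 1\<rfloor>)" unfolding f using fl1 by arith
  have "ga g (replicate (nat \<lfloor>y\<rfloor>) (T, False)) = ga (ga g [(T, False)]) (replicate (nat \<lfloor>y - 1\<rfloor>) (T, False))"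
    unfolding k using g by (simp add: gapp_assoc)
  moreover have "y - of_int \<lfloor>y\<rfloor> = (y - 1) - of_int \<lfloor>y - 1\<rfloor>" using f by simp
  ultimately show ?thesis unfolding tray_def by simp
qed

lemma tray_0: "g \<in> VV \<Longrightarrow> tray A R phi g 0 = Vert g"
  by (simp add: tray_def canon_def canon_edge_def gapp_Nil)

lemma tray_piece: "g \<in> VV \<Longrightarrow> real k \<le> y \<Longrightarrow> y \<le> real k + 1 \<Longrightarrow>
   tray A R phi g y = cn (Edge (ga g (replicate k (T, False))) T (y - real k))"
proof (induction k arbitrary: g y)
  case 0 then show ?case by (simp add: tray_le1 canon_def gapp_Nil)
next
  case (Suc k)
  have g1: "ga g [(T, False)] \<in> VV" using Suc.prems by (simp add: gapp_verts)
  have "tray A R phi g y = tray A R phi (ga g [(T, False)]) (y - 1)"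
    using Suc.prems by (intro tray_shift) auto
  also have "\<dots> = cn (Edge (ga (ga g [(T, False)]) (replicate k (T, False))) T (y - 1 - real k))"
    using Suc.prems by (intro Suc.IH[OF g1]) auto
  also have "ga (ga g [(T, False)]) (replicate k (T, False)) = ga g (replicate (Suc k) (T, False))"
    using Suc.prems by (simp add: gapp_assoc replicate_app_Cons_same[symmetric])
  finally show ?case by (simp add: algebra_simps)
qed

lemma tray_cont: "g \<in> VV \<Longrightarrow> continuous_map (top_of_set {0..real K}) XX (tray A R phi g)"
proof -
  assume g: "g \<in> VV"
  let ?T = "\<lambda>k::nat. {real k .. real k + 1} \<inter> {0..real K}"
  let ?f = "\<lambda>k y. cn (Edge (ga g (replicate k (T, False))) T (y - real k))"
  show ?thesis
  proof (rule pasting_lemma_closed[where I = "{..K}" and T = ?T and f = ?f])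
    show "finite {..K}" by simp
    fix k assume k: "k \<in> {..K}"
    show "closedin (top_of_set {0..real K}) (?T k)"
      by (rule closed_subset) auto
    have gk: "ga g (replicate k (T, False)) \<in> VV" using g by (intro gapp_verts) (auto simp: over_def)
    have "continuous_map (top_of_set (?T k)) (top_of_set {0..1}) (\<lambda>y. y - real k)"
      by (auto simp: continuous_map_in_subtopology intro!: continuous_intros)
    then have "continuous_map (top_of_set (?T k)) PT (\<lambda>y. Edge (ga g (replicate k (T, False))) T (y - real k))"
      using gk by (intro cont_into_edge) auto
    then have "continuous_map (top_of_set (?T k)) XX (?f k)"
      using cont_canon by (rule continuous_map_compose[unfolded o_def])
    then show "continuous_map (subtopology (top_of_set {0..real K}) (?T k)) XX (?f k)"
      by (simp add: subtopology_subtopology Int_commute)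
  next
    fix i j y assume "i \<in> {..K}" "j \<in> {..K}" "y \<in> topspace (top_of_set {0..real K}) \<inter> ?T i \<inter> ?T j"
    then show "?f i y = ?f j y" using tray_piece[OF g, of i y] tray_piece[OF g, of j y] by auto
  next
    fix y assume y: "y \<in> topspace (top_of_set {0..real K})"
    define k where "k = min (nat \<lfloor>y\<rfloor>) K"
    have "real k \<le> y" "y \<le> real k + 1"
      using y by (auto simp: k_def min_def of_nat_nat) linarith+
    then show "\<exists>j. j \<in> {..K} \<and> y \<in> ?T j \<and> tray A R phi g y = ?f j y"
      using y tray_piece[OF g, of k y] by (intro exI[of _ k]) (auto simp: k_def)
  qed
qed

end

definition jx :: "'b list \<Rightarrow> real \<Rightarrow> nat" where
  "jx W x = min (nat \<lfloor>x * real (length W)\<rfloor>) (length W - 1)"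

lemma jx_props:
  assumes "W \<noteq> []" "0 \<le> x" "x \<le> 1"
  shows "jx W x < length W \<and> real (jx W x) \<le> x * real (length W) \<and> x * real (length W) \<le> real (jx W x) + 1"
proof -
  let ?N = "length W"
  define j where "j = jx W x"
  have N: "?N > 0" using assms by simp
  have xN: "0 \<le> x * real ?N" "x * real ?N \<le> real ?N" using assms by (auto simp: mult_left_le_one_le)
  have jN: "j < ?N" using N by (simp add: j_def jx_def min_less_iff_disj)
  have f: "real (nat \<lfloor>x * real ?N\<rfloor>) = of_int \<lfloor>x * real ?N\<rfloor>" using xN by simp
  have f2: "of_int \<lfloor>x * real ?N\<rfloor> \<le> x * real ?N" by (rule of_int_floor_le)
  have "real j \<le> real (nat \<lfloor>x * real ?N\<rfloor>)" unfolding j_def jx_def by simp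
  then have l: "real j \<le> x * real ?N" using f f2 by linarith
  have r: "x * real ?N \<le> real j + 1"
  proof (cases "nat \<lfloor>x * real ?N\<rfloor> \<le> ?N - 1")
    case True
    then have "j = nat \<lfloor>x * real ?N\<rfloor>" by (simp add: j_def jx_def)
    then show ?thesis using xN by linarith
  next
    case False
    then have "j = ?N - 1" by (simp add: j_def jx_def)
    moreover have "real (?N - 1) + 1 = real ?N" using N by (simp add: of_nat_diff Suc_le_eq)
    ultimately show ?thesis using xN by simp
  qed
  show ?thesis using jN l r by (simp add: j_def)
qed

lemma jx_other:
  assumes j: "j < length W" "real j \<le> x * real (length W)" "x * real (length W) \<le> real j + 1"
    and ne: "jx W x \<noteq> j"
  shows "jx W x = Suc j \<and> x * real (length W) = real j + 1"
proof -
  let ?N = "length W"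
  show ?thesis
  proof (cases "x * real ?N < real j + 1")
    case True
    then have "\<lfloor>x * real ?N\<rfloor> = int j" using j by (simp add: floor_eq_iff)
    then have "jx W x = j" using j by (simp add: jx_def)
    then show ?thesis using ne by simp
  next
    case False
    then have eq: "x * real ?N = real j + 1" using j by simp
    then have fl: "nat \<lfloor>x * real ?N\<rfloor> = Suc j" by simp
    show ?thesis
    proof (cases "Suc j < ?N")
      case True then show ?thesis using fl eq by (simp add: jx_def)
    next
      case False then have "jx W x = j" using fl j by (simp add: jx_def)
      then show ?thesis using ne by simp
    qed
  qed
qed

lemma jx_0: "jx W 0 = 0" by (simp add: jx_def)
lemma jx_1: "W \<noteq> [] \<Longrightarrow> jx W 1 = length W - 1" by (simp add: jx_def)

context cx2
begin

fun FF :: "nat \<Rightarrow> 'a gword set \<Rightarrow> 'a gen \<times> bool \<Rightarrow> real \<Rightarrow> real \<Rightarrow> 'a xpt" where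
  "FF 0 g c x y = sq g c (x, y)"
| "FF (Suc n) g c x y = (if y \<le> 1 then sq g c (x, y) else
     (if phiL c = [] then tray A R phi (ga g [(T, False)]) (y - 1) else
       FF n (ga (ga g [(T, False)]) (take (jx (phiL c) x) (phiL c))) (phiL c ! jx (phiL c) x)
          (x * real (length (phiL c)) - real (jx (phiL c) x)) (y - 1)))"

lemma gj_verts: "g \<in> VV \<Longrightarrow> vl A c \<Longrightarrow> ga (ga g [(T, False)]) (take j (phiL c)) \<in> VV"
  by (intro gapp_verts) (auto intro: over_take vl_phiL_over)

lemma conj_back: "g \<in> VV \<Longrightarrow> vl A c \<Longrightarrow> ga (ga g [(T, False)]) (phiL c) = ga (ga g [c]) [(T, False)]"
proof -
  assume g: "g \<in> VV" and c: "vl A c"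
  obtain b e where be: "c = (L b, e)" "b \<in> A" using c by (rule vl_cases)
  have "ga (ga g [(T, False)]) (phiL c) = ga g ((T, False) # phiL c)" using g by (simp add: gapp_assoc)
  also have "\<dots> = ga g [c, (T, False)]" using gapp_conj[OF g be(2), of e] be by simp
  also have "\<dots> = ga (ga g [c]) [(T, False)]" using g be by (simp add: gapp_assoc)
  finally show ?thesis .
qed

lemma FF_bot: "g \<in> VV \<Longrightarrow> vl A c \<Longrightarrow> 0 \<le> x \<Longrightarrow> x \<le> 1 \<Longrightarrow> FF n g c x 0 = lpt g c x"
  by (cases n) (simp_all add: sq_bot)

lemma FF_left: "g \<in> VV \<Longrightarrow> vl A c \<Longrightarrow> 0 \<le> y \<Longrightarrow> y \<le> real n + 1 \<Longrightarrow> FF n g c 0 y = tray A R phi g y"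
proof (induction n arbitrary: g c y)
  case 0 then show ?case by (simp add: sq_left tray_le1)
next
  case (Suc n)
  note g = Suc.prems(1) and c = Suc.prems(2)
  show ?case
  proof (cases "y \<le> 1")
    case True then show ?thesis using Suc.prems by (simp add: sq_left tray_le1)
  next
    case False
    let ?u = "ga g [(T, False)]"
    let ?W = "phiL c"
    have u: "?u \<in> VV" using g by (simp add: gapp_verts)
    have sh: "tray A R phi g y = tray A R phi ?u (y - 1)" using g False by (intro tray_shift) auto
    show ?thesis
    proof (cases "?W = []")
      case True then show ?thesis using False sh by simp
    next
      case Wne: False
      have c0: "vl A (?W ! 0)" using c Wne by (intro vl_phiL_nth) auto
      have "FF (Suc n) g c 0 y = FF n ?u (?W ! 0) 0 (y - 1)"
        using False Wne u by (simp add: jx_0 gapp_Nil)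
      also have "\<dots> = tray A R phi ?u (y - 1)"
        using Suc.prems False by (intro Suc.IH[OF u c0]) auto
      finally show ?thesis using sh by simp
    qed
  qed
qed

lemma FF_right: "g \<in> VV \<Longrightarrow> vl A c \<Longrightarrow> 0 \<le> y \<Longrightarrow> y \<le> real n + 1 \<Longrightarrow> FF n g c 1 y = tray A R phi (ga g [c]) y"
proof (induction n arbitrary: g c y)
  case 0 then show ?case by (simp add: sq_right tray_le1 gapp_verts vl_GG)
next
  case (Suc n)
  note g = Suc.prems(1) and c = Suc.prems(2)
  have gc: "ga g [c] \<in> VV" using g c by (simp add: gapp_verts vl_GG)
  show ?case
  proof (cases "y \<le> 1")
    case True then show ?thesis using Suc.prems gc by (simp add: sq_right tray_le1)
  next
    case False
    let ?u = "ga g [(T, False)]"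
    let ?W = "phiL c"
    let ?N = "length ?W"
    have u: "?u \<in> VV" using g by (simp add: gapp_verts)
    have sh: "tray A R phi (ga g [c]) y = tray A R phi (ga ?u ?W) (y - 1)"
      using gc False conj_back[OF g c] by (simp add: tray_shift)
    show ?thesis
    proof (cases "?W = []")
      case True then show ?thesis using False sh u by (simp add: gapp_Nil)
    next
      case Wne: False
      have cN: "vl A (?W ! (?N - 1))" using c Wne by (intro vl_phiL_nth) auto
      have gN: "ga ?u (take (?N - 1) ?W) \<in> VV" using gj_verts[OF g c] .
      have "FF (Suc n) g c 1 y = FF n (ga ?u (take (?N - 1) ?W)) (?W ! (?N - 1)) 1 (y - 1)"
        using False Wne by (simp add: jx_1 of_nat_diff Suc_le_eq)
      also have "\<dots> = tray A R phi (ga (ga ?u (take (?N - 1) ?W)) [?W ! (?N - 1)]) (y - 1)"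
        using Suc.prems False by (intro Suc.IH[OF gN cN]) auto
      also have "ga (ga ?u (take (?N - 1) ?W)) [?W ! (?N - 1)] = ga ?u ?W"
      proof -
        have "take (?N - 1) ?W @ [?W ! (?N - 1)] = ?W" using Wne
          by (metis append_butlast_last_id butlast_conv_take last_conv_nth)
        then show ?thesis using u vl_phiL_over[OF c] by (metis gapp_assoc over_take)
      qed
      finally show ?thesis using sh by simp
    qed
  qed
qed

lemma FF_stable: "y \<le> real n + 1 \<Longrightarrow> FF (Suc n) g c x y = FF n g c x y"
proof (induction n arbitrary: g c x y)
  case 0 then show ?case by simp
next
  case (Suc n)
  show ?case
  proof (cases "y \<le> 1")
    case True then show ?thesis by simp
  next
    case False
    let ?W = "phiL c"
    let ?G = "ga (ga g [(T, False)]) (take (jx ?W x) ?W)"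
    let ?C = "?W ! jx ?W x"
    let ?S = "x * real (length ?W) - real (jx ?W x)"
    have L: "FF (Suc (Suc n)) g c x y = (if ?W = [] then tray A R phi (ga g [(T, False)]) (y - 1) else FF (Suc n) ?G ?C ?S (y - 1))"
      by (subst FF.simps(2)) (simp only: False if_False)
    have R: "FF (Suc n) g c x y = (if ?W = [] then tray A R phi (ga g [(T, False)]) (y - 1) else FF n ?G ?C ?S (y - 1))"
      by (subst FF.simps(2)) (simp only: False if_False)
    have "FF (Suc n) ?G ?C ?S (y - 1) = FF n ?G ?C ?S (y - 1)" using Suc.prems by (intro Suc.IH) simp
    then show ?thesis unfolding L R by simp
  qed
qed

lemma FF_stable': "y \<le> real n + 1 \<Longrightarrow> n \<le> m \<Longrightarrow> FF m g c x y = FF n g c x y"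
proof (induction m)
  case 0 then show ?case by simp
next
  case (Suc m)
  show ?case
  proof (cases "n = Suc m")
    case True then show ?thesis by simp
  next
    case False
    then have "n \<le> m" using Suc.prems by simp
    then show ?thesis using Suc FF_stable[of y m] by simp
  qed
qed

lemma FF_piece:
  assumes g: "g \<in> VV" and c: "vl A c" and Wne: "phiL c \<noteq> []" and j: "j < length (phiL c)"
    and xj: "real j \<le> x * real (length (phiL c))" "x * real (length (phiL c)) \<le> real j + 1"
    and y: "1 \<le> y" "y \<le> real n + 2"
  shows "FF (Suc n) g c x y = FF n (ga (ga g [(T, False)]) (take j (phiL c))) (phiL c ! j)
          (x * real (length (phiL c)) - real j) (y - 1)"
proof -
  let ?u = "ga g [(T, False)]"
  let ?W = "phiL c"
  let ?N = "length ?W"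
  have u: "?u \<in> VV" using g by (simp add: gapp_verts)
  have Wo: "over GG ?W" using c by (rule vl_phiL_over)
  have cj: "vl A (?W ! j)" using c j by (rule vl_phiL_nth)
  have gj: "ga ?u (take j ?W) \<in> VV" using gj_verts[OF g c] .
  have x01: "0 \<le> x" "x \<le> 1"
  proof -
    have "0 \<le> x * real ?N" using xj by linarith
    then show "0 \<le> x" using Wne by (simp add: zero_le_mult_iff)
    have "x * real ?N \<le> real ?N" using xj j by linarith
    then show "x \<le> 1" using Wne by simp
  qed
  show ?thesis
  proof (cases "y = 1")
    case True
    have "FF (Suc n) g c x y = pathpt ?u ?W x" using True g c x01 by (simp add: sq_top)
    also have "\<dots> = lpt (ga ?u (take j ?W)) (?W ! j) (x * real ?N - real j)"
      by (rule pathpt_any[OF u Wo j xj])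
    also have "\<dots> = FF n (ga ?u (take j ?W)) (?W ! j) (x * real ?N - real j) (y - 1)"
      using True xj by (simp add: FF_bot[OF gj cj])
    finally show ?thesis .
  next
    case False
    then have y1: "\<not> y \<le> 1" using y by simp
    have e: "FF (Suc n) g c x y = FF n (ga ?u (take (jx ?W x) ?W)) (?W ! jx ?W x) (x * real ?N - real (jx ?W x)) (y - 1)"
      using y1 Wne by simp
    show ?thesis
    proof (cases "jx ?W x = j")
      case True then show ?thesis using e by simp
    next
      case False
      then have o: "jx ?W x = Suc j" "x * real ?N = real j + 1" using jx_other[OF j xj] by auto
      have sj: "Suc j < ?N" using jx_props[OF Wne x01] o by simp
      have cj1: "vl A (?W ! Suc j)" using c sj by (rule vl_phiL_nth)
      have gj1: "ga ?u (take (Suc j) ?W) \<in> VV" using gj_verts[OF g c] .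
      have "FF (Suc n) g c x y = FF n (ga ?u (take (Suc j) ?W)) (?W ! Suc j) 0 (y - 1)"
        using e o by simp
      also have "\<dots> = tray A R phi (ga ?u (take (Suc j) ?W)) (y - 1)"
        using y False by (intro FF_left[OF gj1 cj1]) auto
      also have "ga ?u (take (Suc j) ?W) = ga (ga ?u (take j ?W)) [?W ! j]"
        using u Wo j by (simp add: gapp_assoc over_take take_Suc_conv_app_nth)
      also have "tray A R phi \<dots> (y - 1) = FF n (ga ?u (take j ?W)) (?W ! j) 1 (y - 1)"
        using y False by (intro FF_right[OF gj cj, symmetric]) auto
      finally show ?thesis using o by simp
    qed
  qed
qed

end

lemma paste_pw:
  assumes fin: "finite I" and cl: "\<And>i. i \<in> I \<Longrightarrow> closed (TT i)"
    and ct: "\<And>i. i \<in> I \<Longrightarrow> continuous_map (top_of_set (D \<inter> TT i)) Y (f i)"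
    and pw: "\<And>i p. i \<in> I \<Longrightarrow> p \<in> D \<inter> TT i \<Longrightarrow> F p = f i p"
    and cov: "\<And>p. p \<in> D \<Longrightarrow> \<exists>i\<in>I. p \<in> TT i"
  shows "continuous_map (top_of_set D) Y F"
proof (rule pasting_lemma_closed[where I = I and T = "\<lambda>i. D \<inter> TT i" and f = f])
  show "finite I" by (rule fin)
  fix i assume i: "i \<in> I"
  show "closedin (top_of_set D) (D \<inter> TT i)" using cl[OF i] by (rule closedin_closed_Int)
  show "continuous_map (subtopology (top_of_set D) (D \<inter> TT i)) Y (f i)"
    using ct[OF i] by (simp add: subtopology_subtopology)
next
  fix i j p assume "i \<in> I" "j \<in> I" "p \<in> topspace (top_of_set D) \<inter> (D \<inter> TT i) \<inter> (D \<inter> TT j)"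
  then show "f i p = f j p" using pw by (metis IntD1 IntD2 IntI topspace_euclidean_subtopology)
next
  fix p assume "p \<in> topspace (top_of_set D)"
  then have pD: "p \<in> D" by simp
  then obtain i where "i \<in> I" "p \<in> TT i" using cov by blast
  then show "\<exists>j. j \<in> I \<and> p \<in> D \<inter> TT j \<and> F p = f j p" using pw pD by blast
qed

context cx2
begin

lemma FF_cont: "g \<in> VV \<Longrightarrow> vl A c \<Longrightarrow>
  continuous_map (top_of_set ({0..1} \<times> {0..real n + 1})) XX (\<lambda>p. FF n g c (fst p) (snd p))"
proof (induction n arbitrary: g c)
  case 0
  have e: "{0..1::real} \<times> {0..real 0 + 1} = SQ" by simp
  show ?case unfolding e using sq_cont[OF 0] by (rule continuous_map_eq) auto
next
  case (Suc n)
  note g = Suc.prems(1) and c = Suc.prems(2)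
  let ?D = "{0..1::real} \<times> {0..real (Suc n) + 1}"
  let ?u = "ga g [(T, False)]"
  let ?W = "phiL c"
  let ?N = "length ?W"
  have u: "?u \<in> VV" using g by (simp add: gapp_verts)
  show ?case
  proof (cases "?W = []")
    case True
    let ?T = "\<lambda>i::nat. if i = 0 then SQ else {0..1::real} \<times> {1..real (Suc n) + 1}"
    let ?f = "\<lambda>i::nat. if i = 0 then sq g c else (\<lambda>p. tray A R phi ?u (snd p - 1))"
    show ?thesis
    proof (rule paste_pw[where I = "{0, 1}" and TT = ?T and f = ?f])
      fix i assume i: "i \<in> {0::nat, 1}"
      show "closed (?T i)" by (auto intro!: closed_Times)
      show "continuous_map (top_of_set (?D \<inter> ?T i)) XX (?f i)"
      proof (cases "i = 0")
        case True
        have "?D \<inter> ?T i = SQ" using True by auto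
        then show ?thesis using True sq_cont[OF g c] by simp
      next
        case False
        have a: "continuous_map (top_of_set (?D \<inter> ?T i)) (top_of_set {0..real (Suc n)}) (\<lambda>p. snd p - 1)"
          using False by (auto simp: continuous_map_in_subtopology intro!: continuous_intros)
        show ?thesis using False continuous_map_compose[OF a tray_cont[OF u, of "Suc n"]]
          by (simp add: o_def)
      qed
    next
      fix i p assume i: "i \<in> {0::nat, 1}" and p: "p \<in> ?D \<inter> ?T i"
      show "FF (Suc n) g c (fst p) (snd p) = ?f i p"
      proof (cases "i = 0")
        case True then show ?thesis using p by auto
      next
        case False
        then have y: "1 \<le> snd p" "0 \<le> fst p" "fst p \<le> 1" using p by auto
        show ?thesis
        proof (cases "snd p = 1")
          case y1: True
          have "FF (Suc n) g c (fst p) (snd p) = pathpt ?u ?W (fst p)" using y y1 g c by (simp add: sq_top)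
          also have "\<dots> = Vert ?u" using True by (simp add: pathpt_def)
          also have "\<dots> = tray A R phi ?u (snd p - 1)" using y1 u by (simp add: tray_0)
          finally show ?thesis using False by simp
        next
          case False then show ?thesis using y True \<open>i \<noteq> 0\<close> by simp
        qed
      qed
    next
      fix p assume "p \<in> ?D"
      then show "\<exists>i\<in>{0::nat, 1}. p \<in> ?T i" by (cases "snd p \<le> 1") auto
    qed simp
  next
    case Wne: False
    have Wo: "over GG ?W" using c by (rule vl_phiL_over)
    let ?T = "\<lambda>i. case i of None \<Rightarrow> SQ | Some j \<Rightarrow> {p. real j \<le> fst p * real ?N \<and> fst p * real ?N \<le> real j + 1 \<and> 1 \<le> snd p}"
    let ?f = "\<lambda>i. case i of None \<Rightarrow> sq g c | Some j \<Rightarrow>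
       (\<lambda>p. FF n (ga ?u (take j ?W)) (?W ! j) (fst p * real ?N - real j) (snd p - 1))"
    show ?thesis
    proof (rule paste_pw[where I = "insert None (Some ` {..<?N})" and TT = ?T and f = ?f])
      show "finite (insert None (Some ` {..<?N}))" by simp
    next
      fix i assume i: "i \<in> insert None (Some ` {..<?N})"
      show "closed (?T i)"
      proof (cases i)
        case None then show ?thesis by (auto intro!: closed_Times)
      next
        case (Some j) then show ?thesis
          by (auto intro!: closed_Collect_conj closed_Collect_le continuous_intros)
      qed
      show "continuous_map (top_of_set (?D \<inter> ?T i)) XX (?f i)"
      proof (cases i)
        case None
        have "?D \<inter> ?T i = SQ" using None by auto
        then show ?thesis using None sq_cont[OF g c] by simp
      next
        case (Some j)
        then have j: "j < ?N" using i by auto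
        have cj: "vl A (?W ! j)" using c j by (rule vl_phiL_nth)
        have gj: "ga ?u (take j ?W) \<in> VV" using gj_verts[OF g c] .
        have a: "continuous_map (top_of_set (?D \<inter> ?T i)) (top_of_set ({0..1} \<times> {0..real n + 1}))
                  (\<lambda>p. (fst p * real ?N - real j, snd p - 1))"
          using Some by (auto simp: continuous_map_in_subtopology intro!: continuous_intros)
        show ?thesis using continuous_map_compose[OF a Suc.IH[OF gj cj]] Some by (simp add: o_def)
      qed
    next
      fix i p assume i: "i \<in> insert None (Some ` {..<?N})" and p: "p \<in> ?D \<inter> ?T i"
      show "FF (Suc n) g c (fst p) (snd p) = ?f i p"
      proof (cases i)
        case None then show ?thesis using p by auto
      next
        case (Some j)
        then have j: "j < ?N" using i by auto
        show ?thesis using FF_piece[OF g c Wne j, of "fst p" "snd p" n] p Some by auto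
      qed
    next
      fix p assume p: "p \<in> ?D"
      show "\<exists>i\<in>insert None (Some ` {..<?N}). p \<in> ?T i"
      proof (cases "snd p \<le> 1")
        case True then show ?thesis using p by (intro bexI[of _ None]) auto
      next
        case False
        have x: "0 \<le> fst p" "fst p \<le> 1" using p by auto
        show ?thesis using jx_props[OF Wne x] False
          by (intro bexI[of _ "Some (jx ?W (fst p))"]) auto
      qed
    qed
  qed
qed

end

locale cx3 = cx2 +
  fixes P :: "'a xpt \<Rightarrow> real"
  assumes lm: "is_level_map A R phi P"
begin

lemma P_cont: "continuous_map XX euclideanreal P" using lm by (simp add: is_level_map_def)

lemma P_vert: "g \<in> VV \<Longrightarrow> P (Vert g) = lev g" using lm by (simp add: is_level_map_def)

lemma P_ce_L: "g \<in> VV \<Longrightarrow> b \<in> A \<Longrightarrow> 0 \<le> s \<Longrightarrow> s \<le> 1 \<Longrightarrow> P (canon_edge A R phi g (L b) s) = lev g"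
proof -
  assume g: "g \<in> VV" and b: "b \<in> A" and s: "0 \<le> s" "s \<le> 1"
  consider "s = 0" | "s = 1" | "0 < s \<and> s < 1" using s by linarith
  then show ?thesis
  proof cases
    case 1 then show ?thesis using g by (simp add: canon_edge_def P_vert)
  next
    case 2 then show ?thesis using g b by (simp add: canon_edge_def P_vert gstep_eq gapp_verts lev_gapp)
  next
    case 3 then show ?thesis using g b lm by (auto simp: canon_edge_def is_level_map_def)
  qed
qed

lemma P_ce_T: "g \<in> VV \<Longrightarrow> 0 \<le> s \<Longrightarrow> s \<le> 1 \<Longrightarrow> P (canon_edge A R phi g T s) = lev g + s"
proof -
  assume g: "g \<in> VV" and s: "0 \<le> s" "s \<le> 1"
  consider "s = 0" | "s = 1" | "0 < s \<and> s < 1" using s by linarith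
  then show ?thesis
  proof cases
    case 1 then show ?thesis using g by (simp add: canon_edge_def P_vert)
  next
    case 2 then show ?thesis using g by (simp add: canon_edge_def P_vert gstep_eq gapp_verts lev_gapp)
  next
    case 3 then show ?thesis using g lm by (auto simp: canon_edge_def is_level_map_def)
  qed
qed

lemma P_lpt: "g \<in> VV \<Longrightarrow> vl A c \<Longrightarrow> 0 \<le> s \<Longrightarrow> s \<le> 1 \<Longrightarrow> P (lpt g c s) = lev g"
proof -
  assume g: "g \<in> VV" and c: "vl A c" and s: "0 \<le> s" "s \<le> 1"
  obtain b e where be: "c = (L b, e)" "b \<in> A" using c by (rule vl_cases)
  show ?thesis
  proof (cases e)
    case False then show ?thesis using be g s by (simp add: lpt_def P_ce_L)
  next
    case True
    have h: "ga g [c] \<in> VV" "lev (ga g [c]) = lev g" using g be by (simp_all add: gapp_verts lev_gapp)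
    then show ?thesis using be True s by (simp add: lpt_def P_ce_L)
  qed
qed

lemma tsum_vl: "(\<forall>x\<in>set W. vl A x) \<Longrightarrow> tsum W = 0"
  by (induction W) (auto simp: vl_def)

lemma phiL_all_vl: "vl A c \<Longrightarrow> \<forall>x\<in>set (phiL c). vl A x"
  by (metis in_set_conv_nth vl_phiL_nth)

lemma P_pathpt: "u \<in> VV \<Longrightarrow> vl A c \<Longrightarrow> 0 \<le> x \<Longrightarrow> x \<le> 1 \<Longrightarrow> P (pathpt u (phiL c) x) = lev u"
proof -
  assume u: "u \<in> VV" and c: "vl A c" and x: "0 \<le> x" "x \<le> 1"
  let ?W = "phiL c"
  show ?thesis
  proof (cases "?W = []")
    case True then show ?thesis using u by (simp add: pathpt_def P_vert)
  next
    case False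
    obtain j where j: "j < length ?W" "real j \<le> x * real (length ?W)" "x * real (length ?W) \<le> real j + 1"
      using pathpt_exists_j[OF False x] by blast
    have Wo: "over GG ?W" using c by (rule vl_phiL_over)
    have uj: "ga u (take j ?W) \<in> VV" using u Wo by (simp add: gapp_verts over_take)
    have lj: "lev (ga u (take j ?W)) = lev u"
    proof -
      have "\<forall>x\<in>set (take j ?W). vl A x" using phiL_all_vl[OF c] by (meson in_set_takeD)
      then show ?thesis using u Wo by (simp add: lev_gapp over_take tsum_vl)
    qed
    have "P (pathpt u ?W x) = P (lpt (ga u (take j ?W)) (?W ! j) (x * real (length ?W) - real j))"
      using pathpt_any[OF u Wo j] by simp
    also have "\<dots> = lev u" using P_lpt[OF uj vl_phiL_nth[OF c j(1)]] j lj by simp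
    finally show ?thesis .
  qed
qed

lemma P_tray: "g \<in> VV \<Longrightarrow> 0 \<le> y \<Longrightarrow> P (tray A R phi g y) = lev g + y"
proof -
  assume g: "g \<in> VV" and y: "0 \<le> y"
  define k where "k = nat \<lfloor>y\<rfloor>"
  have kk: "real k = of_int \<lfloor>y\<rfloor>" using y by (simp add: k_def)
  have k: "real k \<le> y" "y < real k + 1" unfolding kk by linarith+
  have gk: "ga g (replicate k (T, False)) \<in> VV" using g by (intro gapp_verts) (auto simp: over_def)
  have "tray A R phi g y = canon_edge A R phi (ga g (replicate k (T, False))) T (y - real k)"
    using tray_piece[OF g k(1)] k by (simp add: canon_def)
  moreover have "lev (ga g (replicate k (T, False))) = lev g + real k"
    using g by (simp add: lev_gapp over_def)
  ultimately show ?thesis using P_ce_T[OF gk] k by simp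
qed

lemma P_sq: "g \<in> VV \<Longrightarrow> vl A c \<Longrightarrow> p \<in> SQ \<Longrightarrow> lev g \<le> P (sq g c p) \<and> P (sq g c p) \<le> lev g + 1"
proof -
  assume g: "g \<in> VV" and c: "vl A c" and p: "p \<in> SQ"
  obtain x y where xy: "p = (x, y)" by (cases p)
  have r: "0 \<le> x" "x \<le> 1" "0 \<le> y" "y \<le> 1" using p xy by auto
  have gc: "ga g [c] \<in> VV" "lev (ga g [c]) = lev g" using g c vl_GG[OF c]
    by (auto simp: gapp_verts lev_gapp vl_def)
  have u: "ga g [(T, False)] \<in> VV" "lev (ga g [(T, False)]) = lev g + 1" using g by (simp_all add: gapp_verts lev_gapp)
  consider "y = 0" | "x = 0" | "x = 1" | "y = 1" | "0 < x \<and> x < 1 \<and> 0 < y \<and> y < 1" using r by linarith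
  then show ?thesis
  proof cases
    case 1 then show ?thesis using xy r g c by (simp add: sq_bot P_lpt)
  next
    case 2 then show ?thesis using xy r g c by (simp add: sq_left P_ce_T)
  next
    case 3 then show ?thesis using xy r g c gc by (simp add: sq_right P_ce_T)
  next
    case 4 then show ?thesis using xy r g c u by (simp add: sq_top P_pathpt)
  next
    case 5
    obtain h b z where hbz: "h \<in> VV" "lev h = lev g" "b \<in> A" "cmod z < 1" "sq g c (x, y) = Cell h (ConjCell b) z"
      using sq_interior[OF g c] 5 by blast
    then show ?thesis using lm xy by (auto simp: is_level_map_def)
  qed
qed

lemma FF_level: "g \<in> VV \<Longrightarrow> vl A c \<Longrightarrow> k \<le> n \<Longrightarrow> real k \<le> y \<Longrightarrow> y \<le> real k + 1 \<Longrightarrow> 0 \<le> x \<Longrightarrow> x \<le> 1 \<Longrightarrow>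
  lev g + real k \<le> P (FF n g c x y) \<and> P (FF n g c x y) \<le> lev g + real k + 1"
proof (induction n arbitrary: g c k x y)
  case 0 then show ?case using P_sq[of g c "(x, y)"] by auto
next
  case (Suc n)
  note g = Suc.prems(1) and c = Suc.prems(2)
  let ?u = "ga g [(T, False)]"
  let ?W = "phiL c"
  have u: "?u \<in> VV" "lev ?u = lev g + 1" using g by (simp_all add: gapp_verts lev_gapp)
  show ?case
  proof (cases "y \<le> 1")
    case True
    show ?thesis
    proof (cases "k = 0")
      case True then show ?thesis using Suc.prems \<open>y \<le> 1\<close> P_sq[OF g c, of "(x, y)"] by auto
    next
      case False
      then have "k = 1" "y = 1" using Suc.prems \<open>y \<le> 1\<close> by auto
      then show ?thesis using Suc.prems u by (simp add: sq_top P_pathpt)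
    qed
  next
    case False
    then have k1: "k \<ge> 1" using Suc.prems by (cases k) auto
    show ?thesis
    proof (cases "?W = []")
      case True
      then have "P (FF (Suc n) g c x y) = lev g + y" using False u by (simp add: P_tray)
      then show ?thesis using Suc.prems by simp
    next
      case Wne: False
      let ?j = "jx ?W x"
      have jp: "?j < length ?W" "real ?j \<le> x * real (length ?W)" "x * real (length ?W) \<le> real ?j + 1"
        using jx_props[OF Wne] Suc.prems by auto
      have cj: "vl A (?W ! ?j)" using c jp(1) by (rule vl_phiL_nth)
      have gj: "ga ?u (take ?j ?W) \<in> VV" using gj_verts[OF g c] .
      have lj: "lev (ga ?u (take ?j ?W)) = lev g + 1"
      proof -
        have "\<forall>x\<in>set (take ?j ?W). vl A x" using phiL_all_vl[OF c] by (meson in_set_takeD)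
        then show ?thesis using u vl_phiL_over[OF c] by (simp add: lev_gapp over_take tsum_vl)
      qed
      have e: "FF (Suc n) g c x y = FF n (ga ?u (take ?j ?W)) (?W ! ?j) (x * real (length ?W) - real ?j) (y - 1)"
        using False Wne by simp
      have "lev (ga ?u (take ?j ?W)) + real (k - 1) \<le> P (FF n (ga ?u (take ?j ?W)) (?W ! ?j) (x * real (length ?W) - real ?j) (y - 1))
          \<and> P (FF n (ga ?u (take ?j ?W)) (?W ! ?j) (x * real (length ?W) - real ?j) (y - 1)) \<le> lev (ga ?u (take ?j ?W)) + real (k - 1) + 1"
        using Suc.prems k1 jp by (intro Suc.IH[OF gj cj]) (auto simp: of_nat_diff)
      then show ?thesis unfolding e lj using k1 by (simp add: of_nat_diff)
    qed
  qed
qed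

definition Hs :: "'a gword set \<Rightarrow> 'a gen \<times> bool \<Rightarrow> real \<times> real \<Rightarrow> 'a xpt" where
  "Hs g c p = FF (nat \<lceil>snd p\<rceil>) g c (fst p) (snd p)"

lemma Hs_FF: "0 \<le> snd p \<Longrightarrow> snd p \<le> real n + 1 \<Longrightarrow> Hs g c p = FF n g c (fst p) (snd p)"
proof -
  assume y: "0 \<le> snd p" "snd p \<le> real n + 1"
  let ?m = "nat \<lceil>snd p\<rceil>"
  have m: "snd p \<le> real ?m" using y by linarith
  show ?thesis
  proof (cases "?m \<le> n")
    case True then show ?thesis using FF_stable'[of "snd p" ?m n] m by (simp add: Hs_def)
  next
    case False
    from False have "n < ?m" by (simp only: not_le)
    then have nm: "n \<le> ?m" by simp
    show ?thesis using FF_stable'[OF y(2) nm] by (simp add: Hs_def)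
  qed
qed

lemma Hs_cont: "g \<in> VV \<Longrightarrow> vl A c \<Longrightarrow> continuous_map (top_of_set ({0..1} \<times> {0..})) XX (Hs g c)"
proof -
  assume g: "g \<in> VV" and c: "vl A c"
  let ?S = "{0..1::real} \<times> {0::real..}"
  let ?T = "\<lambda>n::nat. ?S \<inter> {p. snd p < real n + 1}"
  let ?f = "\<lambda>n p. FF n g c (fst p) (snd p)"
  show ?thesis
  proof (rule pasting_lemma[where I = UNIV and T = ?T and f = ?f])
    fix n :: nat
    show "openin (top_of_set ?S) (?T n)"
      by (rule openin_open_Int) (auto intro!: open_Collect_less continuous_intros)
    have "continuous_map (top_of_set ({0..1} \<times> {0..real n + 1})) XX (?f n)" by (rule FF_cont[OF g c])
    then have "continuous_map (top_of_set (?T n)) XX (?f n)"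
      by (rule continuous_map_from_subtopology_mono) auto
    then show "continuous_map (subtopology (top_of_set ?S) (?T n)) XX (?f n)"
      by (simp add: subtopology_subtopology Int_absorb1)
  next
    fix i j p assume "i \<in> (UNIV :: nat set)" "j \<in> (UNIV :: nat set)" "p \<in> topspace (top_of_set ?S) \<inter> ?T i \<inter> ?T j"
    then show "?f i p = ?f j p" using Hs_FF[of p i g c] Hs_FF[of p j g c] by auto
  next
    fix p assume p: "p \<in> topspace (top_of_set ?S)"
    have "snd p < real (nat \<lceil>snd p\<rceil>) + 1" using p by auto linarith
    then show "\<exists>j. j \<in> UNIV \<and> p \<in> ?T j \<and> Hs g c p = ?f j p"
      using p by (intro exI[of _ "nat \<lceil>snd p\<rceil>"]) (simp add: Hs_def)
  qed
qed

end

lemma sphere_cis: "cmod z = 1 \<Longrightarrow> z = cis (Arg2pi z)"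
proof -
  assume z: "cmod z = 1"
  have "is_Arg z (Arg2pi z)" using Arg2pi by blast
  then show ?thesis using z by (simp add: is_Arg_def cis_conv_exp)
qed

lemma circ_param:
  assumes z: "cmod z = 1" and n: "n > 0"
  shows "\<exists>k s. k < n \<and> 0 \<le> s \<and> s < 1 \<and> z = cis (2 * pi * ((real k + s) / real n))"
proof -
  define t where "t = Arg2pi z / (2 * pi)"
  have t: "0 \<le> t" "t < 1" using Arg2pi[of z] by (auto simp: t_def field_simps)
  define k where "k = nat \<lfloor>real n * t\<rfloor>"
  define s where "s = real n * t - real k"
  have nt: "0 \<le> real n * t" "real n * t < real n" using t n by auto
  have kk: "real k = of_int \<lfloor>real n * t\<rfloor>" using nt by (simp add: k_def)
  have s: "0 \<le> s" "s < 1" unfolding s_def kk by linarith+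
  have "real k < real n" using nt kk by linarith
  then have kn: "k < n" by simp
  have "(real k + s) / real n = t" using n by (simp add: s_def)
  then have "z = cis (2 * pi * ((real k + s) / real n))" using sphere_cis[OF z] by (simp add: t_def)
  then show ?thesis using kn s by blast
qed

lemma local_arg:
  assumes z0: "z0 = cis (2 * pi * t0)" and z: "cmod z = 1"
  shows "cis (2 * pi * (t0 + Arg (z / z0) / (2 * pi))) = z"
proof -
  have n0: "cmod z0 = 1" using z0 by simp
  then have "z0 \<noteq> 0" by auto
  have q: "cmod (z / z0) = 1" using z n0 by (simp add: norm_divide)
  then have "z / z0 \<noteq> 0" by auto
  then have "cis (Arg (z / z0)) = sgn (z / z0)" by (rule cis_Arg)
  also have "\<dots> = z / z0" using q by (simp add: sgn_eq)
  finally have c: "cis (Arg (z / z0)) = z / z0" .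
  have "2 * pi * (t0 + Arg (z / z0) / (2 * pi)) = 2 * pi * t0 + Arg (z / z0)" by (simp add: field_simps)
  then have "cis (2 * pi * (t0 + Arg (z / z0) / (2 * pi))) = z0 * cis (Arg (z / z0))"
    by (simp add: z0 cis_mult)
  also have "\<dots> = z" using c \<open>z0 \<noteq> 0\<close> by simp
  finally show ?thesis .
qed

lemma cont_sphere_from_param:
  fixes \<beta> :: "complex \<Rightarrow> real"
  assumes psi: "continuous_on {-1..2} (\<lambda>t. \<beta> (cis (2 * pi * t)))"
  shows "continuous_on (sphere 0 1) \<beta>"
  unfolding continuous_on_eq_continuous_within
proof
  fix z0 :: complex assume z0s: "z0 \<in> sphere 0 1"
  then have z0n: "cmod z0 = 1" by simp
  define t0 where "t0 = Arg2pi z0 / (2 * pi)"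
  have t0: "0 \<le> t0" "t0 < 1" using Arg2pi[of z0] by (auto simp: t0_def field_simps)
  have z0c: "z0 = cis (2 * pi * t0)" using sphere_cis[OF z0n] by (simp add: t0_def)
  define \<tau> where "\<tau> z = t0 + Arg (z / z0) / (2 * pi)" for z
  have tr: "\<tau> z \<in> {-1..2}" for z
  proof -
    have a: "-pi < Arg (z / z0)" "Arg (z / z0) \<le> pi" using Arg_bounded[of "z / z0"] by auto
    have h1: "-1/2 \<le> Arg (z / z0) / (2 * pi)" using a pi_gt_zero by (simp add: field_simps)
    have h2: "Arg (z / z0) / (2 * pi) \<le> 1/2" using a pi_gt_zero by (simp add: field_simps)
    show ?thesis unfolding \<tau>_def atLeastAtMost_iff using h1 h2 t0 by (intro conjI; linarith)
  qed
  have z0ne: "z0 \<noteq> 0" using z0n by auto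
  have "isCont (\<lambda>z. Arg (z / z0)) z0"
  proof (rule continuous_at_compose[unfolded o_def, of _ "\<lambda>z. z / z0" Arg])
    have "isCont (\<lambda>z. z * (1 / z0)) z0" by (rule continuous_mult_right) (rule continuous_ident)
    then show "isCont (\<lambda>z. z / z0) z0" by simp
    have "1 \<notin> \<real>\<^sub>\<le>\<^sub>0" by (simp add: complex_nonpos_Reals_iff)
    then show "isCont Arg (z0 / z0)" using z0ne by (simp add: continuous_at_Arg)
  qed
  then have "isCont (\<lambda>z. t0 + Arg (z / z0) * (1 / (2 * pi))) z0"
    by (intro continuous_add continuous_const continuous_mult_right)
  then have "isCont \<tau> z0" unfolding \<tau>_def by simp
  then have ct: "continuous (at z0 within sphere 0 1) \<tau>"
    by (rule continuous_at_imp_continuous_at_within)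
  have cp: "continuous (at (\<tau> z0) within \<tau> ` sphere 0 1) (\<lambda>t. \<beta> (cis (2 * pi * t)))"
  proof -
    have "continuous (at (\<tau> z0) within {-1..2}) (\<lambda>t. \<beta> (cis (2 * pi * t)))"
      using psi tr by (simp add: continuous_on_eq_continuous_within)
    then show ?thesis by (rule continuous_within_subset) (use tr in auto)
  qed
  have c2: "continuous (at z0 within sphere 0 1) (\<lambda>z. \<beta> (cis (2 * pi * \<tau> z)))"
    using continuous_within_compose2[OF ct cp] .
  show "continuous (at z0 within sphere 0 1) \<beta>"
  proof (rule continuous_transform_within[OF c2 zero_less_one z0s])
    fix z :: complex assume "z \<in> sphere 0 1"
    then show "\<beta> (cis (2 * pi * \<tau> z)) = \<beta> z" using local_arg[OF z0c] by (simp add: \<tau>_def)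
  qed
qed

lemma cont_periodic_ext:
  fixes \<psi> :: "real \<Rightarrow> real"
  assumes c: "continuous_on {0..1} \<psi>" and per: "\<And>t. \<psi> (t + 1) = \<psi> t"
  shows "continuous_on {-1..2} \<psi>"
proof -
  have a: "continuous_on {-1..0} \<psi>"
  proof -
    have "continuous_on {-1..0} (\<lambda>t. \<psi> (t + 1))"
      by (rule continuous_on_compose2[OF c]) (auto intro!: continuous_intros)
    then show ?thesis using per by simp
  qed
  have b: "continuous_on {1..2} \<psi>"
  proof -
    have "continuous_on {1..2} (\<lambda>t. \<psi> (t - 1))"
      by (rule continuous_on_compose2[OF c]) (auto intro!: continuous_intros)
    moreover have "\<psi> (t - 1) = \<psi> t" for t using per[of "t - 1"] by simp
    ultimately show ?thesis by simp
  qed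
  have "{-1..2::real} = {-1..0} \<union> {0..1} \<union> {1..2}" by auto
  then show ?thesis using a b c by (metis closed_atLeastAtMost closed_Un continuous_on_closed_Un)
qed

lemma cont_radial:
  fixes \<beta> :: "complex \<Rightarrow> real"
  assumes b: "continuous_on (sphere 0 1) \<beta>"
  shows "continuous_on (cball 0 1) (\<lambda>z. cmod z * \<beta> (z / of_real (cmod z)))"
proof -
  have "compact (\<beta> ` sphere 0 1)" using b by (intro compact_continuous_image) auto
  then obtain M where M: "\<And>w. w \<in> sphere 0 1 \<Longrightarrow> \<bar>\<beta> w\<bar> \<le> M"
  proof -
    have "bounded (\<beta> ` sphere 0 1)" using \<open>compact (\<beta> ` sphere 0 1)\<close> by (rule compact_imp_bounded)
    then obtain M where "\<And>x. x \<in> \<beta> ` sphere 0 1 \<Longrightarrow> norm x \<le> M" unfolding bounded_iff by blast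
    then have "\<And>w. w \<in> sphere 0 1 \<Longrightarrow> \<bar>\<beta> w\<bar> \<le> M" by force
    then show ?thesis using that by blast
  qed
  let ?f = "\<lambda>z. cmod z * \<beta> (z / of_real (cmod z))"
  have c1: "continuous_on (cball 0 1 - {0}) ?f"
  proof (intro continuous_intros)
    have "continuous_on (cball 0 1 - {0}) (\<lambda>z::complex. z / of_real (cmod z))"
      by (intro continuous_intros) auto
    moreover have "(\<lambda>z::complex. z / of_real (cmod z)) ` (cball 0 1 - {0}) \<subseteq> sphere 0 1"
      by (auto simp: norm_divide split: if_splits)
    ultimately show "continuous_on (cball 0 1 - {0}) (\<lambda>z. \<beta> (z / of_real (cmod z)))"
      using continuous_on_compose2[OF b] by blast
  qed
  show ?thesis unfolding continuous_on_eq_continuous_within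
  proof
    fix x :: complex assume x: "x \<in> cball 0 1"
    show "continuous (at x within cball 0 1) ?f"
    proof (cases "x = 0")
      case False
      have "at x within cball 0 1 = at x within (cball 0 1 - {0})"
        by (rule at_within_nhd[where S = "- {0}"]) (use False in auto)
      moreover have "continuous (at x within (cball 0 1 - {0})) ?f"
        using c1 x False by (simp add: continuous_on_eq_continuous_within)
      ultimately show ?thesis by (simp add: continuous_within)
    next
      case True
      have "((\<lambda>z. cmod z) \<longlongrightarrow> 0) (at x within cball 0 1)"
        using True by (auto intro!: tendsto_eq_intros)
      moreover have "\<forall>\<^sub>F z in at x within cball 0 1. norm (?f z) \<le> norm (cmod z) * M"
      proof (rule always_eventually, rule allI)
        fix z :: complex
        show "norm (?f z) \<le> norm (cmod z) * M"
        proof (cases "z = 0")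
          case True then show ?thesis by simp
        next
          case False
          then have "z / of_real (cmod z) \<in> sphere 0 1" by (simp add: norm_divide)
          then show ?thesis using M by (simp add: abs_mult mult_left_mono)
        qed
      qed
      ultimately have "(?f \<longlongrightarrow> 0) (at x within cball 0 1)" by (rule tendsto_0_le)
      then show ?thesis using True by (simp add: continuous_within)
    qed
  qed
qed

locale cx4 = cx2 +
  assumes rA: "\<forall>r\<in>R. over A r"
begin

definition val1 :: "('a gword set \<Rightarrow> real) \<Rightarrow> ('a gword set \<Rightarrow> 'a gen \<Rightarrow> real \<Rightarrow> real) \<Rightarrow> 'a xpt \<Rightarrow> real" where
  "val1 V E q = (case q of Vert g \<Rightarrow> V g | Edge g l s \<Rightarrow> E g l s | Cell _ _ _ \<Rightarrow> 0)"

definition edgeok :: "('a gword set \<Rightarrow> real) \<Rightarrow> ('a gword set \<Rightarrow> 'a gen \<Rightarrow> real \<Rightarrow> real) \<Rightarrow> bool" where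
  "edgeok V E \<longleftrightarrow> (\<forall>g\<in>VV. \<forall>l\<in>GG. E g l 0 = V g \<and> E g l 1 = V (gstep A R phi g l) \<and> continuous_on {0..1} (E g l))"

lemma val_ce: "edgeok V E \<Longrightarrow> g \<in> VV \<Longrightarrow> l \<in> GG \<Longrightarrow> 0 \<le> s \<Longrightarrow> s \<le> 1 \<Longrightarrow> val1 V E (canon_edge A R phi g l s) = E g l s"
  by (auto simp: edgeok_def canon_edge_def val1_def)

lemma val_lpt: "edgeok V E \<Longrightarrow> g \<in> VV \<Longrightarrow> fst c \<in> GG \<Longrightarrow> 0 \<le> s \<Longrightarrow> s \<le> 1 \<Longrightarrow>
   val1 V E (lpt g c s) = (if snd c then E (ga g [c]) (fst c) (1 - s) else E g (fst c) s)"
  by (auto simp: lpt_def val_ce gapp_verts)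

lemma cellword_ok: "g \<in> VV \<Longrightarrow> c \<in> cells A R \<Longrightarrow> over GG (cellword phi c) \<and> ga g (cellword phi c) = g"
proof -
  assume g: "g \<in> VV" and c: "c \<in> cells A R"
  show ?thesis
  proof (cases c)
    case (RelCell r)
    then have r: "r \<in> R" using c by (auto simp: cells_def)
    have "liftw r \<in> QQ" using r by (simp add: relators_def)
    then show ?thesis using RelCell r rA g by (simp add: cellword_def over_liftw gapp_rel)
  next
    case (ConjCell b)
    then have b: "b \<in> A" using c by (auto simp: cells_def)
    then show ?thesis using ConjCell pA g by (simp add: cellword_def conjrel_over gapp_rel conjrel_rel)
  qed
qed

lemma bdry_val_cont:
  assumes ok: "edgeok V E" and g: "g \<in> VV" and w: "over GG w" and gw: "ga g w = g"
  shows "continuous_on (sphere 0 1) (\<lambda>z. val1 V E (bdry A R phi g w z))"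
proof (cases "w = []")
  case True then show ?thesis by (simp add: bdry_def)
next
  case False
  let ?n = "length w"
  have n: "?n > 0" using False by simp
  define \<psi> where "\<psi> t = val1 V E (bdry A R phi g w (cis (2 * pi * t)))" for t
  have per: "\<psi> (t + 1) = \<psi> t" for t
  proof -
    have "2 * pi * (t + 1) = 2 * pi * t + 2 * pi" by (simp add: algebra_simps)
    then show ?thesis by (simp add: \<psi>_def cis_add_2pi)
  qed
  have piece: "continuous_on {real k / real ?n .. (real k + 1) / real ?n} \<psi>" if k: "k < ?n" for k
  proof -
    let ?u = "ga g (take k w)"
    let ?l = "fst (w ! k)"
    have u: "?u \<in> VV" using g w by (simp add: gapp_verts over_take)
    have l: "?l \<in> GG" using w k by (rule over_nth)
    have uc: "ga ?u [w ! k] \<in> VV" using u l by (simp add: gapp_verts)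
    have aff: "\<And>t. t \<in> {real k / real ?n .. (real k + 1) / real ?n} \<Longrightarrow> t * real ?n - real k \<in> {0..1}"
      using n by (auto simp: field_simps)
    define \<sigma> where "\<sigma> t = (if snd (w ! k) then E (ga ?u [w ! k]) ?l (1 - (t * real ?n - real k)) else E ?u ?l (t * real ?n - real k))" for t
    have eq: "\<psi> t = \<sigma> t" if t: "t \<in> {real k / real ?n .. (real k + 1) / real ?n}" for t
    proof -
      have s: "0 \<le> t * real ?n - real k" "t * real ?n - real k \<le> 1" using aff[OF t] by auto
      have "(real k + (t * real ?n - real k)) / real ?n = t" using n by simp
      then have "\<psi> t = val1 V E (bdry A R phi g w (cis (2 * pi * ((real k + (t * real ?n - real k)) / real ?n))))"
        by (simp add: \<psi>_def)
      also have "\<dots> = val1 V E (lpt ?u (w ! k) (t * real ?n - real k))"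
        using bdry_cis'[OF g w gw k s] by simp
      also have "\<dots> = \<sigma> t" using val_lpt[OF ok u l s] by (simp add: \<sigma>_def)
      finally show ?thesis .
    qed
    have "continuous_on {real k / real ?n .. (real k + 1) / real ?n} \<sigma>"
    proof (cases "snd (w ! k)")
      case True
      have cE: "continuous_on {0..1} (E (ga ?u [w ! k]) ?l)" using ok uc l by (simp add: edgeok_def)
      have "continuous_on {real k / real ?n .. (real k + 1) / real ?n} (\<lambda>t. E (ga ?u [w ! k]) ?l (1 - (t * real ?n - real k)))"
        by (rule continuous_on_compose2[OF cE]) (use aff in \<open>auto intro!: continuous_intros\<close>)
      then show ?thesis using True by (simp add: \<sigma>_def)
    next
      case False
      have cE: "continuous_on {0..1} (E ?u ?l)" using ok u l by (simp add: edgeok_def)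
      have "continuous_on {real k / real ?n .. (real k + 1) / real ?n} (\<lambda>t. E ?u ?l (t * real ?n - real k))"
        by (rule continuous_on_compose2[OF cE]) (use aff in \<open>auto intro!: continuous_intros\<close>)
      then show ?thesis using False by (simp add: \<sigma>_def)
    qed
    then show ?thesis by (rule continuous_on_eq) (simp add: eq)
  qed
  have un: "{0..1} = (\<Union>k\<in>{..<?n}. {real k / real ?n .. (real k + 1) / real ?n})"
  proof
    show "{0..1} \<subseteq> (\<Union>k\<in>{..<?n}. {real k / real ?n .. (real k + 1) / real ?n})"
    proof
      fix t :: real assume t: "t \<in> {0..1}"
      then have t': "0 \<le> t" "t \<le> 1" by auto
      have j: "jx w t < ?n" "real (jx w t) \<le> t * real ?n" "t * real ?n \<le> real (jx w t) + 1"
        using jx_props[OF False t'] by auto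
      then show "t \<in> (\<Union>k\<in>{..<?n}. {real k / real ?n .. (real k + 1) / real ?n})"
        using n by (intro UN_I[of "jx w t"]) (auto simp: field_simps)
    qed
    show "(\<Union>k\<in>{..<?n}. {real k / real ?n .. (real k + 1) / real ?n}) \<subseteq> {0..1}"
    proof (rule UN_least)
      fix k assume "k \<in> {..<?n}"
      then have "0 \<le> real k / real ?n" "(real k + 1) / real ?n \<le> 1" using n by (auto simp: field_simps)
      then show "{real k / real ?n .. (real k + 1) / real ?n} \<subseteq> {0..1}" by auto
    qed
  qed
  have "continuous_on {0..1} \<psi>"
    unfolding un by (rule continuous_on_closed_Union) (auto intro: piece)
  then have "continuous_on {-1..2} \<psi>" using per by (rule cont_periodic_ext)
  then show ?thesis using cont_sphere_from_param[of "\<lambda>z. val1 V E (bdry A R phi g w z)"]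
    by (simp add: \<psi>_def)
qed

end

lemma tri_aux: "\<bar>a - c\<bar> * 2 < \<bar>a - b\<bar> \<Longrightarrow> \<bar>b - c\<bar> * 2 < \<bar>a - (b::real)\<bar> \<Longrightarrow> False"
  by (auto simp: abs_if split: if_split_asm)

lemma haus_by_functions:
  assumes "\<And>x y. x \<in> topspace X \<Longrightarrow> y \<in> topspace X \<Longrightarrow> x \<noteq> y \<Longrightarrow>
      \<exists>f. continuous_map X euclideanreal f \<and> f x \<noteq> f y"
  shows "Hausdorff_space X"
  unfolding Hausdorff_space_def
proof (intro allI impI)
  fix x y assume a: "x \<in> topspace X \<and> y \<in> topspace X \<and> x \<noteq> y"
  then obtain f where f: "continuous_map X euclideanreal f" "f x \<noteq> f y" using assms by blast
  define d where "d = \<bar>f x - f y\<bar> / 2"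
  have d: "d > 0" using f by (simp add: d_def)
  let ?U = "{z \<in> topspace X. f z \<in> ball (f x) d}"
  let ?V = "{z \<in> topspace X. f z \<in> ball (f y) d}"
  have "openin X ?U" by (rule openin_continuous_map_preimage[OF f(1)]) simp
  moreover have "openin X ?V" by (rule openin_continuous_map_preimage[OF f(1)]) simp
  moreover have "x \<in> ?U" "y \<in> ?V" using a d by auto
  moreover have "disjnt ?U ?V"
    unfolding disjnt_def by (auto simp: d_def dist_real_def dest: tri_aux)
  ultimately show "\<exists>U V. openin X U \<and> openin X V \<and> x \<in> U \<and> y \<in> V \<and> disjnt U V" by blast
qed

context cx4
begin

definition extf :: "('a gword set \<Rightarrow> real) \<Rightarrow> ('a gword set \<Rightarrow> 'a gen \<Rightarrow> real \<Rightarrow> real) \<Rightarrow>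
    ('a gword set \<Rightarrow> 'a cell \<Rightarrow> complex \<Rightarrow> real) \<Rightarrow> 'a xpt \<Rightarrow> real" where
  "extf V E B q = (case q of Vert g \<Rightarrow> V g | Edge g l s \<Rightarrow> E g l s
     | Cell g c z \<Rightarrow> cmod z * val1 V E (bdry A R phi g (cellword phi c) (z / of_real (cmod z))) + B g c z)"

definition cellok :: "('a gword set \<Rightarrow> 'a cell \<Rightarrow> complex \<Rightarrow> real) \<Rightarrow> bool" where
  "cellok B \<longleftrightarrow> (\<forall>g\<in>VV. \<forall>c\<in>cells A R. continuous_on (cball 0 1) (B g c) \<and> (\<forall>z. cmod z = 1 \<longrightarrow> B g c z = 0))"

lemma bdry_not_cell: "bdry A R phi g w z \<noteq> Cell h c z'"
  by (auto simp: bdry_def canon_edge_def Let_def)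

lemma canon_edge_not_cell: "canon_edge A R phi g l s \<noteq> Cell h c z'"
  by (auto simp: canon_edge_def)

lemma extf_noncell: "(\<And>h c z. q \<noteq> Cell h c z) \<Longrightarrow> extf V E B q = val1 V E q"
  by (cases q) (auto simp: extf_def val1_def)

lemma extf_canon: "edgeok V E \<Longrightarrow> cellok B \<Longrightarrow> p \<in> PC \<Longrightarrow> extf V E B (cn p) = extf V E B p"
proof -
  assume ok: "edgeok V E" and cb: "cellok B" and p: "p \<in> PC"
  show ?thesis
  proof (cases p)
    case (Vert g) then show ?thesis by (simp add: canon_def)
  next
    case (Edge g l s)
    then have gls: "g \<in> VV" "l \<in> GG" "0 \<le> s" "s \<le> 1" using p by (auto simp: pre_carrier_def)
    have "extf V E B (cn p) = val1 V E (canon_edge A R phi g l s)"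
      using Edge by (simp add: canon_def extf_noncell canon_edge_not_cell)
    also have "\<dots> = E g l s" using val_ce[OF ok gls] .
    finally show ?thesis using Edge by (simp add: extf_def)
  next
    case (Cell g c z)
    then have gcz: "g \<in> VV" "c \<in> cells A R" "cmod z \<le> 1" using p by (auto simp: pre_carrier_def)
    show ?thesis
    proof (cases "cmod z = 1")
      case True
      have "B g c z = 0" using cb gcz True by (simp add: cellok_def)
      then show ?thesis using Cell True by (simp add: canon_def extf_noncell bdry_not_cell) (simp add: extf_def)
    next
      case False then show ?thesis using Cell by (simp add: canon_def)
    qed
  qed
qed

lemma extf_cont: "edgeok V E \<Longrightarrow> cellok B \<Longrightarrow> continuous_map XX euclideanreal (extf V E B)"
proof -
  assume ok: "edgeok V E" and cb: "cellok B"
  have "continuous_map PT euclideanreal (extf V E B)"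
  proof (rule cont_from_pre)
    fix g l assume "g \<in> VV" "l \<in> GG"
    then have "continuous_on {0..1} (E g l)" using ok by (simp add: edgeok_def)
    then show "continuous_map (top_of_set {0..1}) euclideanreal (\<lambda>s. extf V E B (Edge g l s))"
      by (simp add: extf_def)
  next
    fix g c assume g: "g \<in> VV" and c: "c \<in> cells A R"
    have w: "over GG (cellword phi c)" "ga g (cellword phi c) = g" using cellword_ok[OF g c] by auto
    have c2: "continuous_on (cball 0 1) (B g c)" using cb g c by (simp add: cellok_def)
    have "continuous_on (cball 0 1) (\<lambda>z. cmod z * val1 V E (bdry A R phi g (cellword phi c) (z / of_real (cmod z))) + B g c z)"
      using continuous_on_add[OF cont_radial[OF bdry_val_cont[OF ok g w]] c2] .
    then show "continuous_map (top_of_set (cball 0 1)) euclideanreal (\<lambda>z. extf V E B (Cell g c z))"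
      by (simp add: extf_def)
  qed simp
  then have "continuous_map PT euclideanreal (\<lambda>p. extf V E B (cn p))"
    by (rule continuous_map_eq) (simp add: topspace_pre extf_canon[OF ok cb])
  then show ?thesis by (rule cont_from_X)
qed

definition "canpt q \<longleftrightarrow> (\<exists>g\<in>VV. q = Vert g) \<or> (\<exists>g\<in>VV. \<exists>l\<in>GG. \<exists>s. 0 < s \<and> s < 1 \<and> q = Edge g l s)
   \<or> (\<exists>g\<in>VV. \<exists>c\<in>cells A R. \<exists>z. cmod z < 1 \<and> q = Cell g c z)"

lemma canon_edge_canpt: "g \<in> VV \<Longrightarrow> l \<in> GG \<Longrightarrow> 0 \<le> s \<Longrightarrow> s \<le> 1 \<Longrightarrow> canpt (canon_edge A R phi g l s)"
  by (auto simp: canon_edge_def canpt_def gstep_eq gapp_verts)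

lemma lpt_canpt: "g \<in> VV \<Longrightarrow> fst c \<in> GG \<Longrightarrow> 0 \<le> s \<Longrightarrow> s \<le> 1 \<Longrightarrow> canpt (lpt g c s)"
  by (auto simp: lpt_def intro!: canon_edge_canpt gapp_verts)

lemma bdry_canpt: "g \<in> VV \<Longrightarrow> over GG w \<Longrightarrow> cmod z = 1 \<Longrightarrow> canpt (bdry A R phi g w z)"
proof -
  assume g: "g \<in> VV" and w: "over GG w" and z: "cmod z = 1"
  show ?thesis
  proof (cases "w = []")
    case True then show ?thesis using g by (simp add: bdry_def canpt_def)
  next
    case False
    have "length w > 0" using False by simp
    then obtain k s where ks: "k < length w" "0 \<le> s" "s < 1" "z = cis (2 * pi * ((real k + s) / real (length w)))"
      using circ_param[OF z] by blast
    have "bdry A R phi g w z = lpt (ga g (take k w)) (w ! k) s" using bdry_cis[OF g w ks(1-3)] ks(4) by simp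
    moreover have "canpt (lpt (ga g (take k w)) (w ! k) s)"
      using g w ks by (intro lpt_canpt) (auto simp: gapp_verts over_take over_nth)
    ultimately show ?thesis by simp
  qed
qed

lemma X_canpt: "q \<in> topspace XX \<Longrightarrow> canpt q"
proof -
  assume "q \<in> topspace XX"
  then obtain p where p: "p \<in> PC" "q = cn p" by (auto simp: topspace_X)
  show ?thesis
  proof (cases p)
    case (Vert g) then show ?thesis using p by (auto simp: canon_def canpt_def pre_carrier_def)
  next
    case (Edge g l s) then show ?thesis using p by (auto simp: canon_def pre_carrier_def intro!: canon_edge_canpt)
  next
    case (Cell g c z)
    then have gcz: "g \<in> VV" "c \<in> cells A R" "cmod z \<le> 1" using p by (auto simp: pre_carrier_def)
    show ?thesis
    proof (cases "cmod z = 1")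
      case True then show ?thesis using p Cell gcz cellword_ok[OF gcz(1,2)] by (simp add: canon_def bdry_canpt)
    next
      case False then show ?thesis using p Cell gcz by (auto simp: canon_def canpt_def)
    qed
  qed
qed

end

context cx4
begin

definition "hV h0 g = (if g = h0 then 1 else (0::real))"
definition "hE h0 g l s = (if g = h0 then 1 - s else 0) + (if gstep A R phi g l = h0 then s else (0::real))"
definition "eE g0 l0 (i::nat) g l s = (if g = g0 \<and> l = l0 then s * (1 - s) * s ^ i else (0::real))"
definition "zV (g::'a gword set) = (0::real)"
definition "zE (g::'a gword set) (l::'a gen) (s::real) = (0::real)"
definition "zB (g::'a gword set) (c::'a cell) (z::complex) = (0::real)"
definition "bB h0 c0 (k::nat) g c z = (if g = h0 \<and> c = c0 then (1 - cmod z) * (if k = 0 then 1 else if k = 1 then Re z else Im z) else (0::real))"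

lemma cont_if_const: "continuous_on S f \<Longrightarrow> continuous_on S g \<Longrightarrow> continuous_on S (\<lambda>x. if P then f x else g x)"
  by (cases P) auto

lemma ok_hat: "edgeok (hV h0) (hE h0)"
  unfolding edgeok_def hV_def hE_def
  by (intro ballI conjI continuous_on_add cont_if_const continuous_intros) simp_all
lemma ok_e: "edgeok zV (eE g0 l0 i)"
  unfolding edgeok_def zV_def eE_def
  by (intro ballI conjI cont_if_const continuous_intros) simp_all
lemma ok_z: "edgeok zV zE"
  unfolding edgeok_def zV_def zE_def by auto
lemma cok_z: "cellok zB"
  unfolding cellok_def zB_def by auto
lemma cok_b: "cellok (bB h0 c0 k)"
  unfolding cellok_def bB_def
  by (intro ballI conjI allI impI cont_if_const continuous_intros) simp_all

definition "sepf q1 q2 \<longleftrightarrow> (\<exists>f. continuous_map XX euclideanreal f \<and> f q1 \<noteq> f q2)"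

lemma sepf_sym: "sepf q1 q2 \<Longrightarrow> sepf q2 q1"
  unfolding sepf_def by metis

lemma sepf_I: "continuous_map XX euclideanreal f \<Longrightarrow> f q1 \<noteq> f q2 \<Longrightarrow> sepf q1 q2"
  unfolding sepf_def by blast

lemma val1_z: "val1 zV zE q = 0"
  by (cases q) (auto simp: val1_def zV_def zE_def)

lemma bump_val: "extf zV zE (bB h0 c0 k) q = (case q of Cell g c z \<Rightarrow> bB h0 c0 k g c z | _ \<Rightarrow> 0)"
  by (cases q) (auto simp: extf_def val1_z zV_def zE_def)

lemma hat_val_canon: "canpt q \<Longrightarrow> (\<forall>h c z. q \<noteq> Cell h c z) \<Longrightarrow> 0 \<le> val1 (hV h0) (hE h0) q \<and> val1 (hV h0) (hE h0) q \<le> 1"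
  by (auto simp: canpt_def val1_def hV_def hE_def)

lemma hat_cell: "g \<in> VV \<Longrightarrow> c \<in> cells A R \<Longrightarrow> cmod z < 1 \<Longrightarrow> extf (hV h0) (hE h0) zB (Cell g c z) < 1"
proof -
  assume g: "g \<in> VV" and c: "c \<in> cells A R" and z: "cmod z < 1"
  let ?q = "bdry A R phi g (cellword phi c) (z / of_real (cmod z))"
  show ?thesis
  proof (cases "z = 0")
    case True then show ?thesis by (simp add: extf_def zB_def)
  next
    case False
    have "canpt ?q" using g cellword_ok[OF g c] False by (intro bdry_canpt) (auto simp: norm_divide)
    then have "val1 (hV h0) (hE h0) ?q \<le> 1" using hat_val_canon bdry_not_cell by blast
    then have "cmod z * val1 (hV h0) (hE h0) ?q \<le> cmod z" by (simp add: mult_left_le)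
    then show ?thesis using z by (simp add: extf_def zB_def)
  qed
qed

lemma sep_cell:
  assumes g: "g \<in> VV" and c: "c \<in> cells A R" and z: "cmod z < 1" and ne: "q \<noteq> Cell g c z"
  shows "sepf (Cell g c z) q"
proof -
  have cb: "\<And>k. continuous_map XX euclideanreal (extf zV zE (bB g c k))"
    by (rule extf_cont[OF ok_z cok_b])
  have pos: "1 - cmod z > 0" using z by simp
  show ?thesis
  proof (cases "\<exists>z'. q = Cell g c z'")
    case True
    then obtain z' where q: "q = Cell g c z'" by blast
    then have zz: "z \<noteq> z'" using ne by simp
    show ?thesis
    proof (cases "cmod z = cmod z'")
      case False
      then show ?thesis using q by (intro sepf_I[OF cb[of 0]]) (simp add: bump_val bB_def)
    next
      case nm: True
      show ?thesis
      proof (cases "Re z = Re z'")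
        case False
        then show ?thesis using q nm pos by (intro sepf_I[OF cb[of 1]]) (simp add: bump_val bB_def)
      next
        case True
        then have "Im z \<noteq> Im z'" using zz complex_eqI by blast
        then show ?thesis using q nm pos by (intro sepf_I[OF cb[of 2]]) (simp add: bump_val bB_def)
      qed
    qed
  next
    case False
    have "extf zV zE (bB g c 0) q = 0" using False
      by (cases q) (auto simp: bump_val bB_def)
    then show ?thesis using pos by (intro sepf_I[OF cb[of 0]]) (simp add: bump_val bB_def)
  qed
qed

lemma sep_VV: "g1 \<noteq> g2 \<Longrightarrow> sepf (Vert g1) (Vert g2)"
  by (rule sepf_I[OF extf_cont[OF ok_hat cok_z, of g1]]) (simp add: extf_def hV_def)

lemma sep_VE:
  assumes "0 < s" "s < 1"
  shows "sepf (Vert g1) (Edge g l s)"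
proof (cases "extf (hV g1) (hE g1) zB (Vert g1) = extf (hV g1) (hE g1) zB (Edge g l s)")
  case False then show ?thesis by (rule sepf_I[OF extf_cont[OF ok_hat cok_z]])
next
  case True
  have "s * (1 - s) * s ^ 0 > 0" using assms by simp
  then show ?thesis using assms by (intro sepf_I[OF extf_cont[OF ok_e cok_z, of g l 0]]) (simp add: extf_def eE_def zV_def)
qed

lemma sep_EE:
  assumes "0 < s" "s < 1" "0 < s'" "s' < 1" "Edge g l s \<noteq> Edge g' l' s'"
  shows "sepf (Edge g l s) (Edge g' l' s')"
proof (cases "g = g' \<and> l = l'")
  case False
  have "s * (1 - s) * s ^ 0 > 0" using assms by simp
  then show ?thesis using False by (intro sepf_I[OF extf_cont[OF ok_e cok_z, of g l 0]]) (auto simp: extf_def eE_def)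
next
  case True
  then have ss: "s \<noteq> s'" using assms by auto
  show ?thesis
  proof (cases "s * (1 - s) = s' * (1 - s')")
    case False
    then show ?thesis using True by (intro sepf_I[OF extf_cont[OF ok_e cok_z, of g l 0]]) (auto simp: extf_def eE_def)
  next
    case eq: True
    have "s * (1 - s) > 0" using assms by simp
    then have "s * (1 - s) * s \<noteq> s' * (1 - s') * s'" using eq ss by (metis mult_left_cancel less_irrefl)
    then show ?thesis using True assms by (intro sepf_I[OF extf_cont[OF ok_e cok_z, of g l 1]]) (auto simp: extf_def eE_def)
  qed
qed

lemma canpt_cases:
  assumes "canpt q"
  obtains (V) g where "q = Vert g"
    | (E) g l s where "q = Edge g l s" "0 < s" "s < 1"
    | (C) g c z where "g \<in> VV" "c \<in> cells A R" "cmod z < 1" "q = Cell g c z"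
  using assms unfolding canpt_def by blast

lemma sep_all: "canpt q1 \<Longrightarrow> canpt q2 \<Longrightarrow> q1 \<noteq> q2 \<Longrightarrow> sepf q1 q2"
proof -
  assume c1: "canpt q1" and c2: "canpt q2" and ne: "q1 \<noteq> q2"
  show ?thesis using c1
  proof (cases rule: canpt_cases)
    case (C g c z) then show ?thesis using ne by (simp add: sep_cell)
  next
    case V1: (V g1)
    show ?thesis using c2
    proof (cases rule: canpt_cases)
      case (V g2) then show ?thesis using V1 ne by (simp add: sep_VV)
    next
      case (E g l s) then show ?thesis using V1 by (simp add: sep_VE)
    next
      case (C g c z) then show ?thesis using ne by (metis sep_cell sepf_sym)
    qed
  next
    case E1: (E g l s)
    show ?thesis using c2
    proof (cases rule: canpt_cases)
      case (V g2) then show ?thesis using E1 by (simp add: sep_VE sepf_sym)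
    next
      case (E g' l' s') then show ?thesis using E1 ne by (simp add: sep_EE)
    next
      case (C g c z) then show ?thesis using ne by (metis sep_cell sepf_sym)
    qed
  qed
qed

lemma X_hausdorff: "Hausdorff_space XX"
proof (rule haus_by_functions)
  fix x y assume "x \<in> topspace XX" "y \<in> topspace XX" "x \<noteq> y"
  then have "sepf x y" using X_canpt sep_all by blast
  then show "\<exists>f. continuous_map XX euclideanreal f \<and> f x \<noteq> f y" by (simp add: sepf_def)
qed

end

theorem lemma3p1:
  fixes A :: "'a set" and R :: "'a fword set" and phi :: "'a \<Rightarrow> 'a fword"
    and P :: "'a xpt \<Rightarrow> real" and v :: "'a gword set" and a :: 'a
  assumes "finite A" and "finite R"
    and "\<forall>r\<in>R. over A r \<and> reduced r"
    and "\<forall>b\<in>A. over A (phi b) \<and> reduced (phi b)"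
    and "is_level_map A R phi P"
    and "v \<in> verts A R phi" and "a \<in> A"
  shows "\<exists>H. proper_cmap (top_of_set ({0..1} \<times> {0..})) (cayley2 A R phi) H
     \<and> (\<forall>x\<in>{0..1}. H (x, 0) = edgemap A R phi v a x)
     \<and> (\<forall>y\<ge>0. H (0, y) = tray A R phi v y
              \<and> H (1, y) = tray A R phi (gstep A R phi v (L a)) y)
     \<and> (\<forall>n::nat. P ` H ` ({0..1} \<times> {real n .. real n + 1})
                  \<subseteq> {P (Vert v) + real n .. P (Vert v) + real n + 1})"
proof -
  interpret cx3 A R phi P
    by unfold_locales (use assms(4,5) in auto)
  interpret c4: cx4 A R phi
    by unfold_locales (use assms(3,4) in auto)
  have v: "v \<in> verts A R phi" by (rule assms(6))
  let ?c = "(L a, False)"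
  have c: "vl A ?c" using assms(7) by (simp add: vl_def)
  define H where "H = Hs v ?c"
  let ?S = "{0..1::real} \<times> {0::real..}"
  have lev_n: "lev v + real n \<le> P (H p) \<and> P (H p) \<le> lev v + real n + 1"
    if p: "p \<in> {0..1} \<times> {real n .. real n + 1}" for p n
  proof -
    have "H p = FF n v ?c (fst p) (snd p)" unfolding H_def using p by (intro Hs_FF) auto
    then show ?thesis using FF_level[OF v c, of n n "snd p" "fst p"] p by auto
  qed
  have hprop: "proper_cmap (top_of_set ?S) (cayley2 A R phi) H"
    unfolding proper_cmap_def
  proof (intro conjI allI impI)
    show cH: "continuous_map (top_of_set ?S) (cayley2 A R phi) H"
      unfolding H_def by (rule Hs_cont[OF v c])
    fix K assume K: "compactin (cayley2 A R phi) K"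
    have Kc: "closedin (cayley2 A R phi) K"
      by (rule compactin_imp_closedin[OF c4.X_hausdorff K])
    have "compactin euclideanreal (P ` K)" using image_compactin[OF K P_cont] .
    then have "bounded (P ` K)" by (simp add: compact_imp_bounded)
    then obtain B where B: "\<And>z. z \<in> P ` K \<Longrightarrow> norm z \<le> B" unfolding bounded_iff by blast
    have M: "\<And>q. q \<in> K \<Longrightarrow> P q \<le> B"
    proof -
      fix q assume "q \<in> K"
      then have "norm (P q) \<le> B" using B by blast
      then show "P q \<le> B" by simp
    qed
    let ?C = "{x \<in> topspace (top_of_set ?S). H x \<in> K}"
    have "closedin (top_of_set ?S) ?C" using closedin_continuous_map_preimage[OF cH Kc] .
    then have cl: "closed ?C" by (rule closedin_closed_trans) (auto intro!: closed_Times)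
    have sub: "?C \<subseteq> {0..1} \<times> {0..max 0 (B - lev v + 1)}"
    proof
      fix p assume p: "p \<in> ?C"
      define n where "n = nat \<lfloor>snd p\<rfloor>"
      have pS: "p \<in> ?S" using p by auto
      have nn: "real n \<le> snd p" "snd p \<le> real n + 1" using pS by (auto simp: n_def)
      have "lev v + real n \<le> P (H p)" using lev_n[of p n] pS nn by auto
      moreover have "P (H p) \<le> B" using p M by auto
      ultimately have "snd p \<le> B - lev v + 1" using nn by linarith
      then show "p \<in> {0..1} \<times> {0..max 0 (B - lev v + 1)}" using pS by auto
    qed
    have "compact ({0..1::real} \<times> {0..max 0 (B - lev v + 1)})" by (intro compact_Times) auto
    then have "bounded ({0..1::real} \<times> {0..max 0 (B - lev v + 1)})" by (rule compact_imp_bounded)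
    then have "bounded ?C" using sub by (rule bounded_subset)
    then have "compact ?C" using cl by (simp add: compact_eq_bounded_closed)
    then show "compactin (top_of_set ?S) ?C" by (simp add: compactin_subtopology)
  qed
  show ?thesis
  proof (intro exI[of _ H] conjI ballI allI impI)
    show "proper_cmap (top_of_set ?S) (cayley2 A R phi) H" by (rule hprop)
  next
    fix x :: real assume x: "x \<in> {0..1}"
    have "H (x, 0) = lpt v ?c x" unfolding H_def Hs_def using x FF_bot[OF v c, of x 0] by simp
    then show "H (x, 0) = edgemap A R phi v a x" by (simp add: lpt_def edgemap_def canon_def)
  next
    fix y :: real assume y: "0 \<le> y"
    have ny: "y \<le> real (nat \<lceil>y\<rceil>) + 1" using y by linarith
    show "H (0, y) = tray A R phi v y" unfolding H_def Hs_def using FF_left[OF v c y] ny by simp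
    show "H (1, y) = tray A R phi (gstep A R phi v (L a)) y"
      unfolding H_def Hs_def using FF_right[OF v c y] ny by (simp add: gstep_eq)
  next
    fix n :: nat
    show "P ` H ` ({0..1} \<times> {real n .. real n + 1}) \<subseteq> {P (Vert v) + real n .. P (Vert v) + real n + 1}"
      using lev_n P_vert[OF v] by auto
  qed
qed


end
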